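(* Fix $x_0$, $\tau\in(0,1)$, $v\in B(0,\rho_{\max})$. There exist a finite positive constant $\beta_1'(x_0)$ and, for each $i\in\{2,\dots,T+1\}$, a finite set $\mathcal{L}_i'$ of sequences of non-negative integers of length $i-1$ and finite positive constants $\beta_i'^{(j_1,\dots,j_{i-1})}(x_0)$, depending on $x_0$ and $(j_1,\dots,j_{i-1})$ but not on $\epsilon$, the perturbed control, or the observations, such that for every nominal control $u\in U$ left continuous at $\tau$, every $(y_1,\dots,y_T)$ and every $\epsilon\in[0,\tau)$: $$\left|\frac{\partial_+}{\partial\epsilon}c(x_1^\epsilon(t),u^\epsilon(t))\right|\le\beta_1'(x_0)\quad\forall t\in(\tau,1];$$ for each $i\in\{2,\dots,T\}$ and all $t\in[i-1,i]$, $$\left|\frac{\partial_+}{\partial\epsilon}c(x_i^\epsilon(t),u^\epsilon(t))\right|\le\sum_{(j_1,\dots,j_{i-1})\in\mathcal{L}_i'}\beta_i'^{(j_1,\dots,j_{i-1})}(x_0)\prod_{m=1}^{i-1}\|y_m\|_2^{j_m};$$ and $$\left|\frac{\partial_+}{\partial\epsilon}h(x^\epsilon(T))\right|\le\sum_{(j_1,\dots,j_T)\in\mathcal{L}_{T+1}'}\beta_{T+1}'^{(j_1,\dots,j_T)}(x_0)\prod_{m=1}^{T}\|y_m\|_2^{j_m}.$$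
   Context: Fix positive integers $T,m,n_x,n_y$ and $\rho_{\max}\in(0,\infty)$; $B(0,\rho_{\max})$ is the closed Euclidean ball of radius $\rho_{\max}$ in $\mathbb{R}^m$; $U$ is the set of piecewise continuous $u:[0,T]\to\mathbb{R}^m$ with $\|u(t)\|_2\le\rho_{\max}$ for all $t$. $f:\mathbb{R}^{n_x}\times\mathbb{R}^m\to\mathbb{R}^{n_x}$ is continuously differentiable and there is $K_1\in[1,\infty)$ with $\|f(x',u')-f(x'',u'')\|_2\le K_1(\|x'-x''\|_2+\|u'-u''\|_2)$ for all $x',x''$ and $u',u''\in B(0,\rho_{\max})$. $g:\mathbb{R}^{n_x}\times\mathbb{R}^{n_y}\to\mathbb{R}^{n_x}$ is continuous and differentiable in its first argument, and there are $K_2,\dots,K_5\ge0$ and positive integers $L_1,L_2$ such that for all $x,y$ both $\|g(x,y)\|_2$ and $\|\frac{\partial}{\partial x}g(x,y)\|_2$ are at most $K_2+K_3\|x\|_2^{L_1}+K_4\|y\|_2^{L_2}+K_5\|x\|_2^{L_1}\|y\|_2^{L_2}$. For a control $w\in U$ the hybrid trajectory from $x_0$ is: $x_1$ on $[0,1]$ solves $\dot x_1=f(x_1,w)$, $x_1(0)=x_0$; for $i=2,\dots,T$, $x_i$ on $[i-1,i]$ solves $\dot x_i=f(x_i,w)$ with $x_i(i-1)=g(x_{i-1}(i-1),y_{i-1})$; $x(t)=x_i(t)$ for $t\in[i-1,i)$, and $x(T)=g(x_T(T),y_T)$. Perturbed control: for $\epsilon\in[0,\tau]$, $u^\epsilon(t)=v$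 if $t\in(\tau-\epsilon,\tau]$ and $u^\epsilon(t)=u(t)$ otherwise; $x^\epsilon$ (modes $x_i^\epsilon$) is the trajectory under $u^\epsilon$. Costs: $c:\mathbb{R}^{n_x}\times\mathbb{R}^m\to\mathbb{R}$ is continuous and continuously differentiable in $x$, $h:\mathbb{R}^{n_x}\to\mathbb{R}$ is differentiable, and there are $K_6,K_7\ge0$ and a positive integer $L_3$ such that $|c(x,u)|$, $\|\frac{\partial}{\partial x}c(x,u)\|_2$, $|h(x)|$, $\|\frac{\partial}{\partial x}h(x)\|_2$ are all at most $K_6+K_7\|x\|_2^{L_3}$ for all $x$ and $u\in B(0,\rho_{\max})$. $\frac{\partial_+}{\partial\epsilon}$ denotes the right derivative with respect to $\epsilon$. *)

theory Defs
  imports "HOL-Analysis.Analysis"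
begin

definition piecewise_continuous_on :: "real \<Rightarrow> real \<Rightarrow> (real \<Rightarrow> 'a::real_normed_vector) \<Rightarrow> bool" where
  "piecewise_continuous_on a b u \<longleftrightarrow>
     (\<exists>S. finite S \<and>
        (\<forall>t\<in>{a..b} - S. continuous (at t within {a..b}) u) \<and>
        (\<forall>s\<in>S. (a < s \<longrightarrow> (\<exists>l. (u \<longlongrightarrow> l) (at_left s))) \<and>
                (s < b \<longrightarrow> (\<exists>l. (u \<longlongrightarrow> l) (at_right s)))))"

definition admissible_controls :: "nat \<Rightarrow> real \<Rightarrow> (real \<Rightarrow> 'u::real_normed_vector) set" where
  "admissible_controls T \<rho> = {u. piecewise_continuous_on 0 (real T) u \<and>
        (\<forall>t\<in>{0..real T}. norm (u t) \<le> \<rho>)}"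

definition needle :: "(real \<Rightarrow> 'u) \<Rightarrow> 'u \<Rightarrow> real \<Rightarrow> real \<Rightarrow> real \<Rightarrow> 'u" where
  "needle u v \<tau> \<epsilon> t = (if \<tau> - \<epsilon> < t \<and> t \<le> \<tau> then v else u t)"

definition ode_sol_on :: "('x::euclidean_space \<Rightarrow> 'u \<Rightarrow> 'x) \<Rightarrow> (real \<Rightarrow> 'u) \<Rightarrow> real \<Rightarrow> real \<Rightarrow> 'x
    \<Rightarrow> (real \<Rightarrow> 'x) \<Rightarrow> bool" where
  "ode_sol_on f w a b x0 \<xi> \<longleftrightarrow> continuous_on {a..b} \<xi> \<and> \<xi> a = x0 \<and>
     (\<forall>t\<in>{a..b}. ((\<lambda>s. f (\<xi> s) (w s)) has_integral (\<xi> t - x0)) {a..t})"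

text \<open>X i is the i-th mode (on [i-1,i]) of the hybrid trajectory from x0 under control w
  and observations ys (indexed 1..T).\<close>
definition hybrid_modes :: "('x::euclidean_space \<Rightarrow> 'u \<Rightarrow> 'x) \<Rightarrow> ('x \<Rightarrow> 'y \<Rightarrow> 'x) \<Rightarrow> nat \<Rightarrow> 'x
    \<Rightarrow> (nat \<Rightarrow> 'y) \<Rightarrow> (real \<Rightarrow> 'u) \<Rightarrow> (nat \<Rightarrow> real \<Rightarrow> 'x) \<Rightarrow> bool" where
  "hybrid_modes f g T x0 ys w X \<longleftrightarrow>
     ode_sol_on f w 0 1 x0 (X 1) \<and>
     (\<forall>i\<in>{2..T}. ode_sol_on f w (real i - 1) (real i)
                    (g (X (i - 1) (real i - 1)) (ys (i - 1))) (X i))"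

end

theory Submission
  imports Defs
begin

lemma gronwall:
  fixes \<phi> :: "real \<Rightarrow> real"
  assumes ab: "a \<le> b" and cont: "continuous_on {a..b} \<phi>" and K: "0 \<le> K"
    and le: "\<And>t. t \<in> {a..b} \<Longrightarrow> \<phi> t \<le> C + K * integral {a..t} \<phi>"
    and t: "t \<in> {a..b}"
  shows "\<phi> t \<le> C * exp (K * (t - a))"
proof -
  define \<Phi> where "\<Phi> s = integral {a..s} \<phi>" for s
  define G where "G s = exp (- (K * (s - a))) * (C + K * \<Phi> s)" for s
  have dPhi: "(\<Phi> has_real_derivative \<phi> x) (at x within {a..b})" if "x \<in> {a..b}" for x
    using integral_has_vector_derivative[OF cont that] unfolding \<Phi>_def
    by (simp add: has_real_derivative_iff_has_vector_derivative)
  have dG: "(G has_real_derivative (exp (- (K * (x - a))) * K * (\<phi> x - (C + K * \<Phi> x)))) (at x within {a..b})"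
    if "x \<in> {a..b}" for x
    unfolding G_def
    by (rule derivative_eq_intros dPhi[OF that] refl | simp)+ (simp add: algebra_simps)
  have contG: "continuous_on {a..t} G"
  proof -
    have "continuous_on {a..b} G"
      using dG by (meson DERIV_continuous continuous_at_imp_continuous_within continuous_on_eq_continuous_within)
    then show ?thesis by (rule continuous_on_subset) (use t in auto)
  qed
  have "(- G) a \<le> (- G) t"
  proof (rule DERIV_nonneg_imp_increasing_open[of a t])
    show "a \<le> t" using t by auto
    show "continuous_on {a..t} (- G)" using contG by (simp add: fun_Compl_def continuous_on_minus)
    fix x assume x: "a < x" "x < t"
    have xin: "x \<in> {a..b}" using x t by auto
    have "(G has_real_derivative (exp (- (K * (x - a))) * K * (\<phi> x - (C + K * \<Phi> x)))) (at x)"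
      using dG[OF xin] x t by (subst (asm) at_within_interior[of x]) auto
    then have "((- G) has_real_derivative - (exp (- (K * (x - a))) * K * (\<phi> x - (C + K * \<Phi> x)))) (at x)"
      by (simp add: fun_Compl_def DERIV_minus)
    moreover have "exp (- (K * (x - a))) * K * (\<phi> x - (C + K * \<Phi> x)) \<le> 0"
      using le[OF xin] K unfolding \<Phi>_def by (intro mult_nonneg_nonpos) auto
    ultimately show "\<exists>y. ((- G) has_real_derivative y) (at x) \<and> 0 \<le> y" by force
  qed
  then have "G t \<le> G a" by simp
  also have "G a = C" by (simp add: G_def \<Phi>_def)
  finally have "exp (- (K * (t - a))) * (C + K * \<Phi> t) \<le> C" by (simp add: G_def)
  then have "C + K * \<Phi> t \<le> C * exp (K * (t - a))"
  proof -
    assume h: "exp (- (K * (t - a))) * (C + K * \<Phi> t) \<le> C"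
    have E: "exp (K * (t - a)) > 0" by simp
    have "C + K * \<Phi> t = exp (K * (t - a)) * (exp (- (K * (t - a))) * (C + K * \<Phi> t))"
      by (simp add: exp_minus)
    also have "\<dots> \<le> exp (K * (t - a)) * C" using h E by (intro mult_left_mono) auto
    finally show ?thesis by (simp add: mult.commute)
  qed
  then show ?thesis using le[OF t] unfolding \<Phi>_def by linarith
qed

lemma vd_right_iff:
  fixes \<phi> :: "real \<Rightarrow> 'a::real_normed_vector"
  shows "(\<phi> has_vector_derivative Z) (at \<epsilon> within {\<epsilon><..}) \<longleftrightarrow>
         ((\<lambda>e. (\<phi> e - \<phi> \<epsilon>) /\<^sub>R (e - \<epsilon>)) \<longlongrightarrow> Z) (at \<epsilon> within {\<epsilon><..})"
proof -
  have ev: "\<forall>\<^sub>F y in at \<epsilon> within {\<epsilon><..}. (\<phi> y - \<phi> \<epsilon> - (y - \<epsilon>) *\<^sub>R Z) /\<^sub>R norm (y - \<epsilon>)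
            = (\<phi> y - \<phi> \<epsilon>) /\<^sub>R (y - \<epsilon>) - Z"
    unfolding eventually_at_filter
  proof (rule always_eventually, intro allI impI)
    fix y assume "y \<noteq> \<epsilon>" "y \<in> {\<epsilon><..}"
    then have y: "y - \<epsilon> > 0" by auto
    have "(\<phi> y - \<phi> \<epsilon> - (y - \<epsilon>) *\<^sub>R Z) /\<^sub>R norm (y - \<epsilon>)
        = (\<phi> y - \<phi> \<epsilon>) /\<^sub>R (y - \<epsilon>) - ((y - \<epsilon>) *\<^sub>R Z) /\<^sub>R (y - \<epsilon>)"
      using y by (simp add: scaleR_diff_right)
    also have "((y - \<epsilon>) *\<^sub>R Z) /\<^sub>R (y - \<epsilon>) = Z" using y by simp
    finally show "(\<phi> y - \<phi> \<epsilon> - (y - \<epsilon>) *\<^sub>R Z) /\<^sub>R norm (y - \<epsilon>)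
            = (\<phi> y - \<phi> \<epsilon>) /\<^sub>R (y - \<epsilon>) - Z" .
  qed
  have "(\<phi> has_vector_derivative Z) (at \<epsilon> within {\<epsilon><..}) \<longleftrightarrow>
      ((\<lambda>y. (\<phi> y - \<phi> \<epsilon> - (y - \<epsilon>) *\<^sub>R Z) /\<^sub>R norm (y - \<epsilon>)) \<longlongrightarrow> 0) (at \<epsilon> within {\<epsilon><..})"
    unfolding has_vector_derivative_def has_derivative_at_within
    by (simp add: bounded_linear_scaleR_left)
  also have "\<dots> \<longleftrightarrow> ((\<lambda>y. (\<phi> y - \<phi> \<epsilon>) /\<^sub>R (y - \<epsilon>) - Z) \<longlongrightarrow> 0) (at \<epsilon> within {\<epsilon><..})"
    by (rule tendsto_cong[OF ev])
  also have "\<dots> \<longleftrightarrow> ((\<lambda>e. (\<phi> e - \<phi> \<epsilon>) /\<^sub>R (e - \<epsilon>)) \<longlongrightarrow> Z) (at \<epsilon> within {\<epsilon><..})"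
    by (simp add: Lim_null[symmetric])
  finally show ?thesis .
qed

lemma int_gronwall:
  fixes \<psi> F :: "real \<Rightarrow> 'a::euclidean_space"
  assumes ab: "a \<le> b" and cont: "continuous_on {a..b} \<psi>"
    and int: "\<And>t. t \<in> {a..b} \<Longrightarrow> (F has_integral (\<psi> t - \<psi> a)) {a..t}"
    and bnd: "\<And>s. s \<in> {a..b} \<Longrightarrow> norm (F s) \<le> B + K * norm (\<psi> s)"
    and K: "0 \<le> K" and B: "0 \<le> B"
    and t: "t \<in> {a..b}"
  shows "norm (\<psi> t) \<le> (norm (\<psi> a) + B * (b - a)) * exp (K * (t - a))"
proof (rule gronwall[OF ab _ K _ t])
  show cn: "continuous_on {a..b} (\<lambda>s. norm (\<psi> s))" using cont by (intro continuous_intros)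
  fix t assume t: "t \<in> {a..b}"
  have sub: "{a..t} \<subseteq> {a..b}" using t by auto
  have cn': "continuous_on {a..t} (\<lambda>s. norm (\<psi> s))" using continuous_on_subset[OF cn sub] .
  have Fint: "F integrable_on {a..t}" using int[OF t] by blast
  have gint: "(\<lambda>s. B + K * norm (\<psi> s)) integrable_on {a..t}"
    by (intro integrable_continuous_interval continuous_intros continuous_on_subset[OF cont sub])
  have tri: "norm (\<psi> t) \<le> norm (\<psi> a) + norm (\<psi> t - \<psi> a)" using norm_triangle_sub[of "\<psi> t" "\<psi> a"] by simp
  have "norm (\<psi> t - \<psi> a) = norm (integral {a..t} F)" using int[OF t] by (simp add: integral_unique)
  also have "\<dots> \<le> integral {a..t} (\<lambda>s. B + K * norm (\<psi> s))"
    by (rule integral_norm_bound_integral[OF Fint gint]) (use bnd sub in auto)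
  also have "\<dots> = B * (t - a) + K * integral {a..t} (\<lambda>s. norm (\<psi> s))"
  proof -
    have i1: "((\<lambda>s. norm (\<psi> s)) has_integral integral {a..t} (\<lambda>s. norm (\<psi> s))) {a..t}"
      using integrable_continuous_interval[OF cn'] by (simp add: integrable_integral)
    have "((\<lambda>s. B + K * norm (\<psi> s)) has_integral (B * (t - a) + K * integral {a..t} (\<lambda>s. norm (\<psi> s)))) {a..t}"
      using has_integral_add[OF has_integral_const_real[of B a t] has_integral_mult_right[OF i1, of K]] t
      by (simp add: mult.commute)
    then show ?thesis by (simp add: integral_unique)
  qed
  finally have "norm (\<psi> t - \<psi> a) \<le> (B * (t - a) + K * integral {a..t} (\<lambda>s. norm (\<psi> s)))" .
  note this tri
  moreover have "B * (t - a) \<le> B * (b - a)" using t B by (intro mult_left_mono) auto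
  ultimately show "norm (\<psi> t) \<le> (norm (\<psi> a) + B * (b - a)) + K * integral {a..t} (\<lambda>s. norm (\<psi> s))"
    by linarith
qed

locale sys =
  fixes f :: "'x::euclidean_space \<Rightarrow> 'u::euclidean_space \<Rightarrow> 'x"
    and f' :: "'x \<times> 'u \<Rightarrow> ('x \<times> 'u) \<Rightarrow>\<^sub>L 'x"
    and \<rho> K1 :: real
  assumes rho_pos: "0 < \<rho>"
    and f_C1: "\<And>p. ((\<lambda>q. f (fst q) (snd q)) has_derivative blinfun_apply (f' p)) (at p)"
    and f'_cont: "continuous_on UNIV f'"
    and K1: "1 \<le> K1"
    and f_lip: "\<And>x1 x2 u1 u2. u1 \<in> cball 0 \<rho> \<Longrightarrow> u2 \<in> cball 0 \<rho> \<Longrightarrow>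
                 norm (f x1 u1 - f x2 u2) \<le> K1 * (norm (x1 - x2) + norm (u1 - u2))"
begin

definition "M0 = norm (f 0 0) + K1 * \<rho>"

lemma M0_nonneg: "0 \<le> M0" using rho_pos K1 by (simp add: M0_def)

lemma f_growth: "u \<in> cball 0 \<rho> \<Longrightarrow> norm (f x u) \<le> M0 + K1 * norm x"
proof -
  assume u: "u \<in> cball 0 \<rho>"
  have "norm (f x u - f 0 0) \<le> K1 * (norm (x - 0) + norm (u - 0))"
    by (rule f_lip) (use u rho_pos in auto)
  moreover have "norm u \<le> \<rho>" using u by simp
  then have "K1 * (norm x + norm u) \<le> K1 * (norm x + \<rho>)" using K1 by (intro mult_left_mono) auto
  ultimately have "norm (f x u - f 0 0) \<le> K1 * norm x + K1 * \<rho>"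
    by (simp add: distrib_left)
  moreover have "norm (f x u) \<le> norm (f 0 0) + norm (f x u - f 0 0)" by (rule norm_triangle_sub)
  ultimately show ?thesis unfolding M0_def by linarith
qed

definition "sol (w::real\<Rightarrow>'u) (a::real) (b::real) (\<xi>::real\<Rightarrow>'x) \<longleftrightarrow> continuous_on {a..b} \<xi> \<and>
     (\<forall>t\<in>{a..b}. ((\<lambda>s. f (\<xi> s) (w s)) has_integral (\<xi> t - \<xi> a)) {a..t})"

lemma sol_bound:
  assumes s: "sol w a b \<xi>" and ab: "a \<le> b" "b \<le> a + 1"
    and w: "\<And>s. s \<in> {a..b} \<Longrightarrow> w s \<in> cball 0 \<rho>" and t: "t \<in> {a..b}"
  shows "norm (\<xi> t) \<le> (norm (\<xi> a) + M0) * exp K1"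
proof -
  have "norm (\<xi> t) \<le> (norm (\<xi> a) + M0 * (b - a)) * exp (K1 * (t - a))"
  proof (rule int_gronwall[OF ab(1) _ _ _ _ M0_nonneg t, where F="\<lambda>s. f (\<xi> s) (w s)"])
    show "continuous_on {a..b} \<xi>" using s unfolding sol_def by auto
    show "\<And>t. t \<in> {a..b} \<Longrightarrow> ((\<lambda>s. f (\<xi> s) (w s)) has_integral \<xi> t - \<xi> a) {a..t}"
      using s unfolding sol_def by auto
    show "\<And>s. s \<in> {a..b} \<Longrightarrow> norm (f (\<xi> s) (w s)) \<le> M0 + K1 * norm (\<xi> s)"
      using f_growth w by auto
    show "0 \<le> K1" using K1 by auto
  qed
  also have "\<dots> \<le> (norm (\<xi> a) + M0) * exp K1"
  proof (rule mult_mono)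
    have "M0 * (b - a) \<le> M0" using ab M0_nonneg by (intro mult_left_le) auto
    then show "norm (\<xi> a) + M0 * (b - a) \<le> norm (\<xi> a) + M0" by linarith
    have "K1 * (t - a) \<le> K1" using t ab K1 by (intro mult_left_le) auto
    then show "exp (K1 * (t - a)) \<le> exp K1" by simp
  qed (use M0_nonneg in auto)
  finally show ?thesis .
qed

lemma sol_diff:
  assumes s1: "sol w a b \<xi>1" and s2: "sol w a b \<xi>2" and ab: "a \<le> b"
    and w: "\<And>s. s \<in> {a..b} \<Longrightarrow> w s \<in> cball 0 \<rho>" and t: "t \<in> {a..b}"
  shows "norm (\<xi>1 t - \<xi>2 t) \<le> norm (\<xi>1 a - \<xi>2 a) * exp (K1 * (t - a))"
proof -
  have "norm (\<xi>1 t - \<xi>2 t) \<le> (norm (\<xi>1 a - \<xi>2 a) + 0 * (b - a)) * exp (K1 * (t - a))"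
  proof (rule int_gronwall[OF ab _ _ _ _ _ t, where F="\<lambda>s. f (\<xi>1 s) (w s) - f (\<xi>2 s) (w s)"])
    show "continuous_on {a..b} (\<lambda>s. \<xi>1 s - \<xi>2 s)" using s1 s2 unfolding sol_def
      by (intro continuous_intros) auto
    fix t assume "t \<in> {a..b}"
    then have "((\<lambda>s. f (\<xi>1 s) (w s) - f (\<xi>2 s) (w s)) has_integral ((\<xi>1 t - \<xi>1 a) - (\<xi>2 t - \<xi>2 a))) {a..t}"
      using s1 s2 unfolding sol_def by (intro has_integral_diff) auto
    moreover have "(\<xi>1 t - \<xi>1 a) - (\<xi>2 t - \<xi>2 a) = \<xi>1 t - \<xi>2 t - (\<xi>1 a - \<xi>2 a)" by simp
    ultimately show "((\<lambda>s. f (\<xi>1 s) (w s) - f (\<xi>2 s) (w s)) has_integral (\<xi>1 t - \<xi>2 t - (\<xi>1 a - \<xi>2 a))) {a..t}"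
      by simp
  next
    fix s assume "s \<in> {a..b}"
    then show "norm (f (\<xi>1 s) (w s) - f (\<xi>2 s) (w s)) \<le> 0 + K1 * norm (\<xi>1 s - \<xi>2 s)"
      using f_lip[OF w w, of s s "\<xi>1 s" "\<xi>2 s"] by simp
  qed (use K1 in auto)
  then show ?thesis by simp
qed

end

lemma right_cauchy_lim:
  fixes F :: "real \<Rightarrow> 'a::euclidean_space"
  assumes C: "\<And>\<eta>. \<eta> > 0 \<Longrightarrow> \<exists>d>0. \<forall>e e'. \<epsilon> < e \<and> e < \<epsilon> + d \<and> \<epsilon> < e' \<and> e' < \<epsilon> + d \<longrightarrow> dist (F e) (F e') < \<eta>"
  shows "\<exists>z. (F \<longlongrightarrow> z) (at \<epsilon> within {\<epsilon><..})"
proof -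
  define X where "X n = F (\<epsilon> + 1 / (real n + 1))" for n
  have small: "\<exists>N. \<forall>n\<ge>N. 1 / (real n + 1) < d" if "d > 0" for d :: real
  proof -
    obtain N :: nat where N: "1 / d < real N" using reals_Archimedean2 by blast
    have "1 / (real n + 1) < d" if "n \<ge> N" for n
    proof -
      have "1 / d < real n + 1" using N that by linarith
      then show ?thesis using \<open>d > 0\<close> by (simp add: field_simps)
    qed
    then show ?thesis by blast
  qed
  have "Cauchy X"
  proof (rule metric_CauchyI)
    fix \<eta> :: real assume "\<eta> > 0"
    obtain d where d: "d > 0" "\<forall>e e'. \<epsilon> < e \<and> e < \<epsilon> + d \<and> \<epsilon> < e' \<and> e' < \<epsilon> + d \<longrightarrow> dist (F e) (F e') < \<eta>"
      using C[OF \<open>\<eta> > 0\<close>] by blast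
    obtain N where N: "\<forall>n\<ge>N. 1 / (real n + 1) < d" using small[OF d(1)] by blast
    have "dist (X m) (X n) < \<eta>" if "m \<ge> N" "n \<ge> N" for m n
    proof -
      have "0 < 1 / (real m + 1)" "0 < 1 / (real n + 1)" by auto
      then show ?thesis unfolding X_def using d(2) N that by auto
    qed
    then show "\<exists>M. \<forall>m\<ge>M. \<forall>n\<ge>M. dist (X m) (X n) < \<eta>" by blast
  qed
  then obtain z where z: "X \<longlonglongrightarrow> z" using Cauchy_convergent_iff convergent_def by blast
  have "(F \<longlongrightarrow> z) (at_right \<epsilon>)"
  proof (rule tendstoI)
    fix \<eta> :: real assume "\<eta> > 0"
    then have h2: "\<eta> / 2 > 0" by simp
    obtain d where d: "d > 0" "\<forall>e e'. \<epsilon> < e \<and> e < \<epsilon> + d \<and> \<epsilon> < e' \<and> e' < \<epsilon> + d \<longrightarrow> dist (F e) (F e') < \<eta> / 2"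
      using C[OF h2] by blast
    obtain N where N: "\<forall>n\<ge>N. 1 / (real n + 1) < d" using small[OF d(1)] by blast
    obtain N2 where N2: "\<forall>n\<ge>N2. dist (X n) z < \<eta> / 2"
      using z h2 unfolding lim_sequentially by blast
    define n where "n = max N N2"
    show "\<forall>\<^sub>F e in at_right \<epsilon>. dist (F e) z < \<eta>"
      unfolding eventually_at_right_field
    proof (intro exI[of _ "\<epsilon> + d"] conjI allI impI)
      show "\<epsilon> + d > \<epsilon>" using d by simp
      fix e assume e: "e > \<epsilon>" "e < \<epsilon> + d"
      have "0 < 1 / (real n + 1)" by auto
      moreover have "1 / (real n + 1) < d" using N n_def by auto
      ultimately have "dist (F e) (X n) < \<eta> / 2" unfolding X_def using d(2) e by auto
      moreover have "dist (X n) z < \<eta> / 2" using N2 n_def by simp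
      ultimately show "dist (F e) z < \<eta>" using dist_triangle[of "F e" z "X n"] by linarith
    qed
  qed
  then show ?thesis by blast
qed

context sys begin

lemma partial_deriv:
  "((\<lambda>y. f y u) has_derivative (\<lambda>h. blinfun_apply (f' (x, u)) (h, 0))) (at x within S)"
proof -
  have "((\<lambda>y. (y, u)) has_derivative (\<lambda>h. (h, 0))) (at x within S)"
    by (auto intro!: derivative_eq_intros)
  from has_derivative_compose[OF this f_C1[of "(x, u)"]] show ?thesis by simp
qed

lemma partial_bl: "bounded_linear (\<lambda>h. blinfun_apply (f' (x, u)) (h, 0))"
  using partial_deriv[of u x UNIV] has_derivative_bounded_linear by blast

lemma partial_norm: "norm (blinfun_apply (F::('x \<times> 'u) \<Rightarrow>\<^sub>L 'x) (h, 0)) \<le> norm F * norm h"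
proof -
  have "norm (blinfun_apply F (h, 0)) \<le> norm F * norm (h, (0::'u))" by (rule norm_blinfun)
  also have "norm (h, (0::'u)) = norm h" by (simp add: norm_Pair)
  finally show ?thesis .
qed

lemma f'_bound: "\<exists>Mf\<ge>0. \<forall>x u. norm x \<le> R \<longrightarrow> u \<in> cball 0 \<rho> \<longrightarrow> norm (f' (x, u)) \<le> Mf"
proof -
  have "compact (cball (0::'x) R \<times> cball (0::'u) \<rho>)" by (intro compact_Times compact_cball)
  then have "compact (f' ` (cball 0 R \<times> cball 0 \<rho>))"
    using compact_continuous_image[OF continuous_on_subset[OF f'_cont subset_UNIV]] by blast
  then obtain B where B: "B > 0" "\<forall>y \<in> f' ` (cball 0 R \<times> cball 0 \<rho>). norm y \<le> B"
    using compact_imp_bounded bounded_pos by metis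
  show ?thesis by (rule exI[of _ B]) (use B in auto)
qed

lemma partial_rem:
  assumes "\<eta> > 0"
  shows "\<exists>\<delta>>0. \<forall>x u h. norm x \<le> R \<longrightarrow> u \<in> cball 0 \<rho> \<longrightarrow> norm h < \<delta> \<longrightarrow>
           norm (f (x + h) u - f x u - blinfun_apply (f' (x, u)) (h, 0)) \<le> \<eta> * norm h"
proof -
  define KS where "KS = cball (0::'x) (R + 1) \<times> cball (0::'u) \<rho>"
  have "compact KS" unfolding KS_def by (intro compact_Times compact_cball)
  then have "uniformly_continuous_on KS f'"
    by (intro compact_uniformly_continuous continuous_on_subset[OF f'_cont]) auto
  then obtain d where d: "d > 0" "\<forall>p\<in>KS. \<forall>p'\<in>KS. dist p' p < d \<longrightarrow> dist (f' p') (f' p) < \<eta>"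
    using assms unfolding uniformly_continuous_on_def by metis
  define \<delta> where "\<delta> = min d 1"
  have "\<delta> > 0" using d by (simp add: \<delta>_def)
  moreover have "norm (f (x + h) u - f x u - blinfun_apply (f' (x, u)) (h, 0)) \<le> \<eta> * norm h"
    if x: "norm x \<le> R" and u: "u \<in> cball 0 \<rho>" and h: "norm h < \<delta>" for x u h
  proof -
    have "norm (f (x + h) u - f x u - blinfun_apply (f' (x, u)) (x + h - x, 0)) \<le> norm (x + h - x) * \<eta>"
    proof (rule differentiable_bound_linearization[of x "x + h" "ball x \<delta>" "\<lambda>y. f y u"
          "\<lambda>y k. blinfun_apply (f' (y, u)) (k, 0)" x \<eta>])
      fix t :: real assume t: "t \<in> {0..1}"
      have "norm (t *\<^sub>R (x + h - x)) \<le> norm h" using t by (simp add: mult_left_le_one_le)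
      then show "x + t *\<^sub>R (x + h - x) \<in> ball x \<delta>" using h by (simp add: dist_norm)
    next
      fix y assume "y \<in> ball x \<delta>"
      show "((\<lambda>y. f y u) has_derivative (\<lambda>k. blinfun_apply (f' (y, u)) (k, 0))) (at y within ball x \<delta>)"
        by (rule partial_deriv)
    next
      fix y assume y: "y \<in> ball x \<delta>"
      have dy: "norm (y - x) < \<delta>" using y by (simp add: dist_norm norm_minus_commute)
      have "(x, u) \<in> KS" using x u by (simp add: KS_def)
      moreover have "(y, u) \<in> KS"
      proof -
        have "norm y \<le> norm x + norm (y - x)" by (rule norm_triangle_sub)
        then show ?thesis using dy x u by (simp add: KS_def \<delta>_def)
      qed
      moreover have "dist (y, u) (x, u) < d" using dy by (simp add: dist_Pair_Pair dist_norm \<delta>_def)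
      ultimately have lt: "norm (f' (y, u) - f' (x, u)) < \<eta>" using d(2) by (simp add: dist_norm)
      show "onorm ((\<lambda>k. blinfun_apply (f' (y, u)) (k, 0)) - (\<lambda>k. blinfun_apply (f' (x, u)) (k, 0))) \<le> \<eta>"
        unfolding fun_diff_def
      proof (rule onorm_le)
        fix k
        have "norm (blinfun_apply (f' (y, u)) (k, 0) - blinfun_apply (f' (x, u)) (k, 0))
            = norm (blinfun_apply (f' (y, u) - f' (x, u)) (k, 0))" by (simp add: blinfun.diff_left)
        also have "\<dots> \<le> norm (f' (y, u) - f' (x, u)) * norm k" by (rule partial_norm)
        also have "\<dots> \<le> \<eta> * norm k" using lt by (intro mult_right_mono) auto
        finally show "norm (blinfun_apply (f' (y, u)) (k, 0) - blinfun_apply (f' (x, u)) (k, 0)) \<le> \<eta> * norm k" .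
      qed
    next
      show "x \<in> ball x \<delta>" using \<open>\<delta> > 0\<close> by simp
    qed
    then show ?thesis by (simp add: mult.commute)
  qed
  ultimately show ?thesis by blast
qed

end

context sys begin

lemma pair_est:
  fixes y0 y1 y2 :: "real \<Rightarrow> 'x"
  assumes ab: "a \<le> b" and w: "\<And>s. s \<in> {a..b} \<Longrightarrow> w s \<in> cball 0 \<rho>"
    and s0: "sol w a b y0" and s1: "sol w a b y1" and s2: "sol w a b y2"
    and al: "\<alpha>1 > 0" "\<alpha>2 > 0"
    and R: "\<And>s. s \<in> {a..b} \<Longrightarrow> norm (y0 s) \<le> R"
    and Mf: "0 \<le> Mf" "\<And>x u. norm x \<le> R \<Longrightarrow> u \<in> cball 0 \<rho> \<Longrightarrow> norm (f' (x, u)) \<le> Mf"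
    and \<eta>1: "0 \<le> \<eta>1" and C0: "0 \<le> C0"
    and rem: "\<And>x u h. norm x \<le> R \<Longrightarrow> u \<in> cball 0 \<rho> \<Longrightarrow> norm h < \<delta>1 \<Longrightarrow>
           norm (f (x + h) u - f x u - blinfun_apply (f' (x, u)) (h, 0)) \<le> \<eta>1 * norm h"
    and c1: "\<And>s. s \<in> {a..b} \<Longrightarrow> norm (y1 s - y0 s) \<le> C0 * \<alpha>1" "C0 * \<alpha>1 < \<delta>1"
    and c2: "\<And>s. s \<in> {a..b} \<Longrightarrow> norm (y2 s - y0 s) \<le> C0 * \<alpha>2" "C0 * \<alpha>2 < \<delta>1"
    and t: "t \<in> {a..b}"
  shows "norm ((y1 t - y0 t) /\<^sub>R \<alpha>1 - (y2 t - y0 t) /\<^sub>R \<alpha>2)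
      \<le> (norm ((y1 a - y0 a) /\<^sub>R \<alpha>1 - (y2 a - y0 a) /\<^sub>R \<alpha>2) + (2 * \<eta>1 * C0) * (b - a)) * exp (Mf * (t - a))"
proof -
  define D where "D s = (y1 s - y0 s) /\<^sub>R \<alpha>1 - (y2 s - y0 s) /\<^sub>R \<alpha>2" for s
  define A where "A s h = blinfun_apply (f' (y0 s, w s)) (h, 0)" for s h
  define r1 where "r1 s = f (y1 s) (w s) - f (y0 s) (w s) - A s (y1 s - y0 s)" for s
  define r2 where "r2 s = f (y2 s) (w s) - f (y0 s) (w s) - A s (y2 s - y0 s)" for s
  define G where "G s = (f (y1 s) (w s) - f (y0 s) (w s)) /\<^sub>R \<alpha>1 - (f (y2 s) (w s) - f (y0 s) (w s)) /\<^sub>R \<alpha>2" for s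
  have bl: "bounded_linear (A s)" for s unfolding A_def by (rule partial_bl)
  have r1b: "norm (r1 s /\<^sub>R \<alpha>1) \<le> \<eta>1 * C0" if s: "s \<in> {a..b}" for s
  proof -
    have "norm (r1 s) \<le> \<eta>1 * norm (y1 s - y0 s)"
      using rem[OF R[OF s] w[OF s], of "y1 s - y0 s"] c1(1)[OF s] c1(2) unfolding r1_def A_def by simp
    also have "\<dots> \<le> \<eta>1 * (C0 * \<alpha>1)" using c1(1)[OF s] \<eta>1 by (intro mult_left_mono) auto
    finally show ?thesis using al by (simp add: field_simps)
  qed
  have r2b: "norm (r2 s /\<^sub>R \<alpha>2) \<le> \<eta>1 * C0" if s: "s \<in> {a..b}" for s
  proof -
    have "norm (r2 s) \<le> \<eta>1 * norm (y2 s - y0 s)"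
      using rem[OF R[OF s] w[OF s], of "y2 s - y0 s"] c2(1)[OF s] c2(2) unfolding r2_def A_def by simp
    also have "\<dots> \<le> \<eta>1 * (C0 * \<alpha>2)" using c2(1)[OF s] \<eta>1 by (intro mult_left_mono) auto
    finally show ?thesis using al by (simp add: field_simps)
  qed
  have Geq: "G s = A s (D s) + (r1 s /\<^sub>R \<alpha>1 - r2 s /\<^sub>R \<alpha>2)" for s
  proof -
    have "A s (D s) = A s (y1 s - y0 s) /\<^sub>R \<alpha>1 - A s (y2 s - y0 s) /\<^sub>R \<alpha>2"
    proof -
      interpret L: bounded_linear "A s" by (rule bl)
      show ?thesis unfolding D_def by (simp add: L.diff L.scaleR)
    qed
    then show ?thesis unfolding G_def r1_def r2_def by (simp add: algebra_simps)
  qed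
  have Gb: "norm (G s) \<le> 2 * \<eta>1 * C0 + Mf * norm (D s)" if s: "s \<in> {a..b}" for s
  proof -
    have "norm (A s (D s)) \<le> Mf * norm (D s)"
    proof -
      have "norm (A s (D s)) \<le> norm (f' (y0 s, w s)) * norm (D s)" unfolding A_def by (rule partial_norm)
      also have "\<dots> \<le> Mf * norm (D s)" using Mf(2)[OF R[OF s] w[OF s]] by (intro mult_right_mono) auto
      finally show ?thesis .
    qed
    moreover have "norm (r1 s /\<^sub>R \<alpha>1 - r2 s /\<^sub>R \<alpha>2) \<le> \<eta>1 * C0 + \<eta>1 * C0"
      using norm_triangle_ineq4[of "r1 s /\<^sub>R \<alpha>1" "r2 s /\<^sub>R \<alpha>2"] r1b[OF s] r2b[OF s] by linarith
    ultimately show ?thesis unfolding Geq using norm_triangle_ineq[of "A s (D s)" "r1 s /\<^sub>R \<alpha>1 - r2 s /\<^sub>R \<alpha>2"]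
      by linarith
  qed
  have Gint: "(G has_integral (D t - D a)) {a..t}" if t: "t \<in> {a..b}" for t
  proof -
    have i0: "((\<lambda>s. f (y0 s) (w s)) has_integral (y0 t - y0 a)) {a..t}" using s0 t unfolding sol_def by auto
    have i1: "((\<lambda>s. f (y1 s) (w s)) has_integral (y1 t - y1 a)) {a..t}" using s1 t unfolding sol_def by auto
    have i2: "((\<lambda>s. f (y2 s) (w s)) has_integral (y2 t - y2 a)) {a..t}" using s2 t unfolding sol_def by auto
    have "(G has_integral (((y1 t - y1 a) - (y0 t - y0 a)) /\<^sub>R \<alpha>1 - ((y2 t - y2 a) - (y0 t - y0 a)) /\<^sub>R \<alpha>2)) {a..t}"
      unfolding G_def
      by (intro has_integral_diff has_integral_cmul i0 i1 i2)
    moreover have "((y1 t - y1 a) - (y0 t - y0 a)) /\<^sub>R \<alpha>1 - ((y2 t - y2 a) - (y0 t - y0 a)) /\<^sub>R \<alpha>2 = D t - D a"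
      unfolding D_def by (simp add: algebra_simps)
    ultimately show ?thesis by simp
  qed
  have Dc: "continuous_on {a..b} D"
    using s0 s1 s2 unfolding sol_def D_def by (intro continuous_intros) auto
  have "norm (D t) \<le> (norm (D a) + (2 * \<eta>1 * C0) * (b - a)) * exp (Mf * (t - a))"
    by (rule int_gronwall[OF ab Dc Gint Gb Mf(1) _ t]) (use \<eta>1 C0 in auto)
  then show ?thesis unfolding D_def .
qed

end

context sys begin

lemma propagate:
  fixes \<xi> :: "real \<Rightarrow> real \<Rightarrow> 'x"
  assumes ab: "a \<le> b"
    and w: "\<And>s. s \<in> {a..b} \<Longrightarrow> w s \<in> cball 0 \<rho>"
    and sols: "\<And>e. e \<in> {\<epsilon>..\<epsilon>1} \<Longrightarrow> sol w a b (\<xi> e)"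
    and e1: "\<epsilon> < \<epsilon>1"
    and d0: "((\<lambda>e. \<xi> e a) has_vector_derivative z0) (at \<epsilon> within {\<epsilon><..})"
    and t: "t \<in> {a..b}"
  shows "\<exists>z. ((\<lambda>e. \<xi> e t) has_vector_derivative z) (at \<epsilon> within {\<epsilon><..}) \<and> norm z \<le> norm z0 * exp (K1 * (t - a))"
proof -
  define q where "q e s = (\<xi> e s - \<xi> \<epsilon> s) /\<^sub>R (e - \<epsilon>)" for e s
  have qa: "((\<lambda>e. q e a) \<longlongrightarrow> z0) (at_right \<epsilon>)" using d0 unfolding vd_right_iff q_def .
  have se: "sol w a b (\<xi> \<epsilon>)" using sols e1 by auto
  have lip: "norm (\<xi> e s - \<xi> \<epsilon> s) \<le> norm (\<xi> e a - \<xi> \<epsilon> a) * exp (K1 * (s - a))"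
    if "e \<in> {\<epsilon>..\<epsilon>1}" "s \<in> {a..b}" for e s
    by (rule sol_diff[OF sols[OF that(1)] se ab w that(2)])
  have qn: "norm (q e s) = norm (\<xi> e s - \<xi> \<epsilon> s) / (e - \<epsilon>)" if "e > \<epsilon>" for e s
    using that unfolding q_def by (simp add: divide_simps)
  have qlip: "norm (q e s) \<le> norm (q e a) * exp (K1 * (s - a))" if e: "e \<in> {\<epsilon><..\<epsilon>1}" and s: "s \<in> {a..b}" for e s
  proof -
    have "norm (\<xi> e s - \<xi> \<epsilon> s) / (e - \<epsilon>) \<le> norm (\<xi> e a - \<xi> \<epsilon> a) * exp (K1 * (s - a)) / (e - \<epsilon>)"
      using lip[of e s] e s by (intro divide_right_mono) auto
    then show ?thesis using e by (simp add: qn)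
  qed
  have ev_e1: "\<forall>\<^sub>F e in at_right \<epsilon>. e \<in> {\<epsilon><..\<epsilon>1}"
    unfolding eventually_at_right_field using e1 by (intro exI[of _ \<epsilon>1]) auto
  obtain R where R: "\<And>s. s \<in> {a..b} \<Longrightarrow> norm (\<xi> \<epsilon> s) \<le> R"
  proof -
    have "compact (\<xi> \<epsilon> ` {a..b})" using se unfolding sol_def by (intro compact_continuous_image) auto
    then obtain B where B: "\<forall>y\<in>\<xi> \<epsilon> ` {a..b}. norm y \<le> B" using compact_imp_bounded bounded_pos by metis
    show ?thesis by (rule that[of B]) (use B in auto)
  qed
  obtain Mf where Mf: "0 \<le> Mf" "\<And>x u. norm x \<le> R \<Longrightarrow> u \<in> cball 0 \<rho> \<Longrightarrow> norm (f' (x, u)) \<le> Mf"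
    using f'_bound[of R] by blast
  define Cq where "Cq = norm z0 + 1"
  define E1 where "E1 = exp (K1 * (b - a))"
  define C0 where "C0 = Cq * E1"
  define Ea where "Ea = exp (Mf * (b - a))"
  have C0: "0 \<le> C0" unfolding C0_def Cq_def E1_def by simp
  have Ea: "Ea > 0" unfolding Ea_def by simp
  have ev_q: "\<forall>\<^sub>F e in at_right \<epsilon>. norm (q e a) < Cq"
    unfolding Cq_def using tendsto_norm[OF qa] by (rule order_tendstoD) simp
  have close: "norm (\<xi> e s - \<xi> \<epsilon> s) \<le> C0 * (e - \<epsilon>)"
    if e: "e \<in> {\<epsilon><..\<epsilon>1}" and eq: "norm (q e a) < Cq" and s: "s \<in> {a..b}" for e s
  proof -
    have "0 \<le> Cq" unfolding Cq_def by simp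
    have "norm (q e s) \<le> norm (q e a) * exp (K1 * (s - a))" by (rule qlip[OF e s])
    also have "\<dots> \<le> Cq * E1" unfolding E1_def using eq s K1 \<open>0 \<le> Cq\<close>
      by (intro mult_mono) (auto intro: less_imp_le)
    finally have "norm (\<xi> e s - \<xi> \<epsilon> s) / (e - \<epsilon>) \<le> C0" using e by (simp add: qn C0_def)
    then show ?thesis using e by (simp add: divide_simps mult.commute)
  qed
  have cauchy: "\<exists>d>0. \<forall>e e'. \<epsilon> < e \<and> e < \<epsilon> + d \<and> \<epsilon> < e' \<and> e' < \<epsilon> + d \<longrightarrow> dist (q e t) (q e' t) < \<eta>"
    if \<eta>: "\<eta> > 0" for \<eta>
  proof -
    define PP where "PP = C0 * (b - a) + 1"
    define \<eta>1 where "\<eta>1 = \<eta> / (8 * Ea * PP)"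
    have pos: "PP > 0" using C0 ab unfolding PP_def by (simp add: add_nonneg_pos)
    have \<eta>1: "\<eta>1 > 0" unfolding \<eta>1_def using \<eta> Ea pos by simp
    obtain \<delta>1 where \<delta>1: "\<delta>1 > 0" "\<And>x u h. norm x \<le> R \<Longrightarrow> u \<in> cball 0 \<rho> \<Longrightarrow> norm h < \<delta>1 \<Longrightarrow>
           norm (f (x + h) u - f x u - blinfun_apply (f' (x, u)) (h, 0)) \<le> \<eta>1 * norm h"
      using partial_rem[OF \<eta>1, of R] by blast
    have ev_d: "\<forall>\<^sub>F e in at_right \<epsilon>. C0 * (e - \<epsilon>) < \<delta>1"
    proof -
      have "((\<lambda>e. C0 * (e - \<epsilon>)) \<longlongrightarrow> C0 * (\<epsilon> - \<epsilon>)) (at_right \<epsilon>)"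
        by (intro tendsto_intros)
      then show ?thesis using \<delta>1(1) by (intro order_tendstoD(2)) auto
    qed
    have ev_z: "\<forall>\<^sub>F e in at_right \<epsilon>. dist (q e a) z0 < \<eta> / (4 * Ea)"
      using qa Ea \<eta> by (intro tendstoD) auto
    have "\<forall>\<^sub>F e in at_right \<epsilon>. e \<in> {\<epsilon><..\<epsilon>1} \<and> norm (q e a) < Cq \<and> C0 * (e - \<epsilon>) < \<delta>1 \<and> dist (q e a) z0 < \<eta> / (4 * Ea)"
      using ev_e1 ev_q ev_d ev_z by eventually_elim auto
    then obtain bb where bb: "bb > \<epsilon>" "\<And>e. e > \<epsilon> \<Longrightarrow> e < bb \<Longrightarrow> e \<in> {\<epsilon><..\<epsilon>1} \<and> norm (q e a) < Cq \<and> C0 * (e - \<epsilon>) < \<delta>1 \<and> dist (q e a) z0 < \<eta> / (4 * Ea)"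
      unfolding eventually_at_right_field by blast
    show ?thesis
    proof (intro exI[of _ "bb - \<epsilon>"] conjI allI impI)
      show "bb - \<epsilon> > 0" using bb by simp
      fix e e' assume ee: "\<epsilon> < e \<and> e < \<epsilon> + (bb - \<epsilon>) \<and> \<epsilon> < e' \<and> e' < \<epsilon> + (bb - \<epsilon>)"
      have P: "e \<in> {\<epsilon><..\<epsilon>1}" "norm (q e a) < Cq" "C0 * (e - \<epsilon>) < \<delta>1" "dist (q e a) z0 < \<eta> / (4 * Ea)"
        using bb(2)[of e] ee by auto
      have P': "e' \<in> {\<epsilon><..\<epsilon>1}" "norm (q e' a) < Cq" "C0 * (e' - \<epsilon>) < \<delta>1" "dist (q e' a) z0 < \<eta> / (4 * Ea)"
        using bb(2)[of e'] ee by auto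
      have est: "norm ((\<xi> e t - \<xi> \<epsilon> t) /\<^sub>R (e - \<epsilon>) - (\<xi> e' t - \<xi> \<epsilon> t) /\<^sub>R (e' - \<epsilon>))
        \<le> (norm ((\<xi> e a - \<xi> \<epsilon> a) /\<^sub>R (e - \<epsilon>) - (\<xi> e' a - \<xi> \<epsilon> a) /\<^sub>R (e' - \<epsilon>)) + (2 * \<eta>1 * C0) * (b - a))
           * exp (Mf * (t - a))"
      proof (rule pair_est[OF ab w se sols sols _ _ R Mf _ C0 \<delta>1(2) _ P(3) _ P'(3) t])
        show "e \<in> {\<epsilon>..\<epsilon>1}" "e' \<in> {\<epsilon>..\<epsilon>1}" using P(1) P'(1) by auto
        show "0 < e - \<epsilon>" "0 < e' - \<epsilon>" using P(1) P'(1) by auto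
        show "0 \<le> \<eta>1" using \<eta>1 by simp
        show "\<And>s. s \<in> {a..b} \<Longrightarrow> norm (\<xi> e s - \<xi> \<epsilon> s) \<le> C0 * (e - \<epsilon>)" using close P by blast
        show "\<And>s. s \<in> {a..b} \<Longrightarrow> norm (\<xi> e' s - \<xi> \<epsilon> s) \<le> C0 * (e' - \<epsilon>)" using close P' by blast
      qed auto
      define r where "r = \<eta> / (4 * Ea)"
      have r: "0 \<le> r" unfolding r_def using \<eta> Ea by simp
      have "dist (q e a) (q e' a) \<le> dist (q e a) z0 + dist z0 (q e' a)" by (rule dist_triangle)
      then have d1: "norm (q e a - q e' a) \<le> r + r" using P(4) P'(4) unfolding r_def
        by (simp add: dist_norm norm_minus_commute)
      have d2: "(2 * \<eta>1 * C0) * (b - a) \<le> r"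
      proof -
        have "(2 * \<eta>1 * C0) * (b - a) = \<eta> * (C0 * (b - a)) / (4 * Ea * PP)"
          unfolding \<eta>1_def using Ea pos by (simp add: field_simps)
        also have "\<dots> \<le> \<eta> * PP / (4 * Ea * PP)"
          using \<eta> Ea pos unfolding PP_def by (intro divide_right_mono mult_left_mono) auto
        also have "\<dots> = \<eta> / (4 * Ea)" using pos by simp
        finally show ?thesis unfolding r_def .
      qed
      have d3: "exp (Mf * (t - a)) \<le> Ea" unfolding Ea_def using t Mf(1) by (auto intro: mult_left_mono)
      have "norm (q e t - q e' t) \<le> (norm (q e a - q e' a) + (2 * \<eta>1 * C0) * (b - a)) * exp (Mf * (t - a))"
        using est unfolding q_def .
      also have "\<dots> \<le> (3 * r) * exp (Mf * (t - a))"
        using d1 d2 by (intro mult_right_mono) auto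
      also have "\<dots> \<le> (3 * r) * Ea" using d3 r by (intro mult_left_mono) auto
      also have "\<dots> < \<eta>" unfolding r_def using Ea \<eta> by simp
      finally show "dist (q e t) (q e' t) < \<eta>" by (simp add: dist_norm)
    qed
  qed
  obtain z where z: "((\<lambda>e. q e t) \<longlongrightarrow> z) (at_right \<epsilon>)"
    using right_cauchy_lim[of \<epsilon> "\<lambda>e. q e t"] cauchy by blast
  have "norm z \<le> norm z0 * exp (K1 * (t - a))"
  proof (rule tendsto_le[OF trivial_limit_at_right_real])
    show "((\<lambda>e. norm (q e a) * exp (K1 * (t - a))) \<longlongrightarrow> norm z0 * exp (K1 * (t - a))) (at_right \<epsilon>)"
      by (intro tendsto_intros qa)
    show "((\<lambda>e. norm (q e t)) \<longlongrightarrow> norm z) (at_right \<epsilon>)" by (intro tendsto_intros z)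
    show "\<forall>\<^sub>F e in at_right \<epsilon>. norm (q e t) \<le> norm (q e a) * exp (K1 * (t - a))"
      using ev_e1 by eventually_elim (use qlip t in auto)
  qed
  moreover have "((\<lambda>e. \<xi> e t) has_vector_derivative z) (at \<epsilon> within {\<epsilon><..})"
    unfolding vd_right_iff using z unfolding q_def .
  ultimately show ?thesis by blast
qed

end

lemma int_sub:
  fixes F :: "real \<Rightarrow> 'a::euclidean_space"
  assumes "(F has_integral I1) {a..p}" "(F has_integral I2) {a..q}" "a \<le> p" "p \<le> q"
  shows "(F has_integral (I2 - I1)) {p..q}"
proof -
  have "F integrable_on {p..q}"
    by (rule integrable_subinterval_real[of F a q]) (use assms in auto)
  then obtain J where J: "(F has_integral J) {p..q}" by blast
  have "(F has_integral (I1 + J)) {a..q}" by (rule has_integral_combine[OF assms(3,4) assms(1) J])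
  then have "I1 + J = I2" using assms(2) by (rule has_integral_unique)
  then show ?thesis using J by (metis add_diff_cancel_left')
qed

context sys begin

lemma sol_restrict: "sol w a b \<xi> \<Longrightarrow> b' \<le> b \<Longrightarrow> sol w a b' \<xi>"
  unfolding sol_def by (auto intro: continuous_on_subset)

lemma sol_shift:
  assumes s: "sol w a b \<xi>" and "a \<le> a'" "a' \<le> b"
  shows "sol w a' b \<xi>"
  unfolding sol_def
proof (intro conjI ballI)
  have "{a'..b} \<subseteq> {a..b}" using assms by auto
  then show "continuous_on {a'..b} \<xi>" using s continuous_on_subset unfolding sol_def by blast
  fix t assume t: "t \<in> {a'..b}"
  have "((\<lambda>s. f (\<xi> s) (w s)) has_integral ((\<xi> t - \<xi> a) - (\<xi> a' - \<xi> a))) {a'..t}"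
    by (rule int_sub) (use s assms t in \<open>auto simp: sol_def\<close>)
  then show "((\<lambda>s. f (\<xi> s) (w s)) has_integral (\<xi> t - \<xi> a')) {a'..t}" by simp
qed

lemma sol_cong:
  assumes "finite S" "\<And>s. s \<in> {a..b} \<Longrightarrow> s \<notin> S \<Longrightarrow> w1 s = w2 s" "sol w1 a b \<xi>"
  shows "sol w2 a b \<xi>"
  unfolding sol_def
proof (intro conjI ballI)
  show "continuous_on {a..b} \<xi>" using assms unfolding sol_def by auto
  fix t assume t: "t \<in> {a..b}"
  have "((\<lambda>s. f (\<xi> s) (w1 s)) has_integral (\<xi> t - \<xi> a)) {a..t}" using assms t unfolding sol_def by auto
  then show "((\<lambda>s. f (\<xi> s) (w2 s)) has_integral (\<xi> t - \<xi> a)) {a..t}"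
    using has_integral_spike_finite_eq[OF assms(1), of "{a..t}" "\<lambda>s. f (\<xi> s) (w2 s)" "\<lambda>s. f (\<xi> s) (w1 s)"]
      assms(2) t by auto
qed

lemma sol_unique:
  assumes "sol w a b \<xi>1" "sol w a b \<xi>2" "\<xi>1 a = \<xi>2 a" "a \<le> b"
    "\<And>s. s \<in> {a..b} \<Longrightarrow> w s \<in> cball 0 \<rho>" "t \<in> {a..b}"
  shows "\<xi>1 t = \<xi>2 t"
  using sol_diff[OF assms(1,2,4,5,6)] assms(3) by simp

lemma ode_sol_on_sol: "ode_sol_on f w a b x0 \<xi> \<Longrightarrow> sol w a b \<xi> \<and> \<xi> a = x0"
  unfolding ode_sol_on_def sol_def by auto

lemma needle_init:
  fixes \<xi> :: "real \<Rightarrow> real \<Rightarrow> 'x"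
  assumes u: "\<And>s. s \<in> {0..1} \<Longrightarrow> u s \<in> cball 0 \<rho>" and v: "v \<in> cball 0 \<rho>"
    and \<epsilon>: "0 \<le> \<epsilon>" "\<epsilon> < \<tau>" and \<tau>: "\<tau> \<le> 1"
    and sols: "\<And>e. e \<in> {0..\<tau>} \<Longrightarrow> sol (needle u v \<tau> e) 0 1 (\<xi> e) \<and> \<xi> e 0 = x0"
    and l: "(u \<longlongrightarrow> l) (at_left (\<tau> - \<epsilon>))" and lb: "l \<in> cball 0 \<rho>"
  shows "((\<lambda>e. \<xi> e (\<tau> - \<epsilon>)) has_vector_derivative (f (\<xi> \<epsilon> (\<tau> - \<epsilon>)) v - f (\<xi> \<epsilon> (\<tau> - \<epsilon>)) l)) (at \<epsilon> within {\<epsilon><..})"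
proof -
  define c where "c = \<tau> - \<epsilon>"
  define xs where "xs = \<xi> \<epsilon> c"
  define Z where "Z = f xs v - f xs l"
  have c: "0 < c" "c \<le> 1" using \<epsilon> \<tau> by (auto simp: c_def)
  have nb: "needle u v \<tau> e s \<in> cball 0 \<rho>" if "s \<in> {0..1}" for e s
    using u[OF that] v by (simp add: needle_def)
  define Rb where "Rb = (norm x0 + M0) * exp K1"
  define Mb where "Mb = M0 + K1 * Rb"
  have bnd: "norm (\<xi> e s) \<le> Rb" if "e \<in> {0..\<tau>}" "s \<in> {0..1}" for e s
    using sol_bound[OF conjunct1[OF sols[OF that(1)]] _ _ nb that(2)] conjunct2[OF sols[OF that(1)]]
    by (simp add: Rb_def)
  have fb: "norm (f (\<xi> e s) (needle u v \<tau> e s)) \<le> Mb" if "e \<in> {0..\<tau>}" "s \<in> {0..1}" for e s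
  proof -
    have "norm (f (\<xi> e s) (needle u v \<tau> e s)) \<le> M0 + K1 * norm (\<xi> e s)" by (rule f_growth[OF nb[OF that(2)]])
    also have "\<dots> \<le> Mb" unfolding Mb_def using bnd[OF that] K1 by (intro add_left_mono mult_left_mono) auto
    finally show ?thesis .
  qed
  have "norm (f (\<xi> 0 0) (needle u v \<tau> 0 0)) \<le> Mb" by (rule fb) (use \<epsilon> in auto)
  then have Mb0: "0 \<le> Mb" by (meson norm_ge_zero order_trans)
  have se: "\<epsilon> \<in> {0..\<tau>}" using \<epsilon> by auto
  have key: "norm ((\<xi> e c - \<xi> \<epsilon> c) /\<^sub>R (e - \<epsilon>) - Z) \<le> K1 * (4 * \<eta>')"
    if e: "\<epsilon> < e" "e \<le> \<tau>" and \<eta>': "0 < \<eta>'"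
      and ul: "\<And>s. \<tau> - e < s \<Longrightarrow> s < c \<Longrightarrow> norm (u s - l) \<le> \<eta>'"
      and xc: "\<And>s. \<tau> - e \<le> s \<Longrightarrow> s \<le> c \<Longrightarrow> norm (\<xi> \<epsilon> s - xs) \<le> \<eta>'"
      and mb: "(e - \<epsilon>) * Mb \<le> \<eta>'"
    for e \<eta>'
  proof -
    define ce where "ce = \<tau> - e"
    have ce: "0 \<le> ce" "ce < c" using e \<epsilon> \<tau> by (auto simp: ce_def c_def)
    have ee: "e \<in> {0..\<tau>}" using e \<epsilon> by auto
    have s_e: "sol (needle u v \<tau> e) 0 1 (\<xi> e)" and s_E: "sol (needle u v \<tau> \<epsilon>) 0 1 (\<xi> \<epsilon>)"
      using sols ee se by auto
    have pre: "\<xi> e ce = \<xi> \<epsilon> ce"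
    proof (rule sol_unique[of u 0 ce])
      show "sol u 0 ce (\<xi> e)"
        by (rule sol_cong[of "{}" _ _ "needle u v \<tau> e"]) (use sol_restrict[OF s_e, of ce] ce c in \<open>auto simp: needle_def ce_def\<close>)
      show "sol u 0 ce (\<xi> \<epsilon>)"
        by (rule sol_cong[of "{}" _ _ "needle u v \<tau> \<epsilon>"]) (use sol_restrict[OF s_E, of ce] ce c in \<open>auto simp: needle_def ce_def c_def\<close>)
      show "\<xi> e 0 = \<xi> \<epsilon> 0" using sols ee se by auto
    qed (use ce c u in auto)
    define Gd where "Gd s = f (\<xi> e s) (needle u v \<tau> e s) - f (\<xi> \<epsilon> s) (needle u v \<tau> \<epsilon> s)" for s
    have ie: "((\<lambda>s. f (\<xi> e s) (needle u v \<tau> e s)) has_integral (\<xi> e c - \<xi> e ce)) {ce..c}"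
      using int_sub[of _ "\<xi> e ce - \<xi> e 0" 0 ce "\<xi> e c - \<xi> e 0" c] s_e ce c unfolding sol_def by auto
    have iE: "((\<lambda>s. f (\<xi> \<epsilon> s) (needle u v \<tau> \<epsilon> s)) has_integral (\<xi> \<epsilon> c - \<xi> \<epsilon> ce)) {ce..c}"
      using int_sub[of _ "\<xi> \<epsilon> ce - \<xi> \<epsilon> 0" 0 ce "\<xi> \<epsilon> c - \<xi> \<epsilon> 0" c] s_E ce c unfolding sol_def by auto
    have iZ: "((\<lambda>s. Z) has_integral (e - \<epsilon>) *\<^sub>R Z) {ce..c}"
      using has_integral_const_real[of Z ce c] ce by (simp add: ce_def c_def)
    have iG: "((\<lambda>s. Gd s - Z) has_integral ((\<xi> e c - \<xi> \<epsilon> c) - (e - \<epsilon>) *\<^sub>R Z)) {ce..c}"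
    proof -
      have "((\<lambda>s. Gd s - Z) has_integral ((\<xi> e c - \<xi> e ce) - (\<xi> \<epsilon> c - \<xi> \<epsilon> ce) - (e - \<epsilon>) *\<^sub>R Z)) {ce..c}"
        unfolding Gd_def by (intro has_integral_diff ie iE iZ)
      then show ?thesis using pre by simp
    qed
    have Gb: "norm (Gd s - Z) \<le> K1 * (4 * \<eta>')" if s: "s \<in> {ce..c} - {ce, c}" for s
    proof -
      have s': "ce < s" "s < c" using s by auto
      have s01: "s \<in> {0..1}" using s' ce c by auto
      have n1: "needle u v \<tau> e s = v" using s' \<epsilon> by (auto simp: needle_def ce_def c_def)
      have n2: "needle u v \<tau> \<epsilon> s = u s" using s' by (auto simp: needle_def c_def)
      have us: "u s \<in> cball 0 \<rho>" using u s01 by auto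
      have "norm (\<xi> e s - \<xi> e ce) \<le> Mb * measure lborel {ce..s}"
      proof (rule has_integral_bound_real[OF Mb0 finite.emptyI])
        show "((\<lambda>s. f (\<xi> e s) (needle u v \<tau> e s)) has_integral (\<xi> e s - \<xi> e ce)) {ce..s}"
          using int_sub[of _ "\<xi> e ce - \<xi> e 0" 0 ce "\<xi> e s - \<xi> e 0" s] s_e ce c s' unfolding sol_def by auto
        fix r assume "r \<in> {ce..s} - {}"
        then show "norm (f (\<xi> e r) (needle u v \<tau> e r)) \<le> Mb" using fb[OF ee] ce s' c by auto
      qed
      also have "\<dots> \<le> Mb * (e - \<epsilon>)" using s' Mb0 by (intro mult_left_mono) (auto simp: ce_def c_def)
      finally have A: "norm (\<xi> e s - \<xi> e ce) \<le> \<eta>'" using mb by (simp add: mult.commute)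
      have B: "norm (\<xi> \<epsilon> ce - xs) \<le> \<eta>'" using xc[of ce] ce by (simp add: ce_def)
      have C: "norm (\<xi> \<epsilon> s - xs) \<le> \<eta>'" using xc[of s] s' by (simp add: ce_def)
      have D: "norm (u s - l) \<le> \<eta>'" using ul[of s] s' by (simp add: ce_def)
      have "norm (\<xi> e s - xs) \<le> norm (\<xi> e s - \<xi> e ce) + norm (\<xi> \<epsilon> ce - xs)"
        using norm_triangle_ineq[of "\<xi> e s - \<xi> e ce" "\<xi> \<epsilon> ce - xs"] pre by simp
      then have E: "norm (\<xi> e s - xs) \<le> 2 * \<eta>'" using A B by linarith
      have "Gd s - Z = (f (\<xi> e s) v - f xs v) + (f xs l - f (\<xi> \<epsilon> s) (u s))"
        unfolding Gd_def Z_def n1 n2 by simp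
      then have "norm (Gd s - Z) \<le> norm (f (\<xi> e s) v - f xs v) + norm (f xs l - f (\<xi> \<epsilon> s) (u s))"
        by (metis norm_triangle_ineq)
      also have "\<dots> \<le> K1 * (norm (\<xi> e s - xs) + norm (v - v)) + K1 * (norm (xs - \<xi> \<epsilon> s) + norm (l - u s))"
        by (intro add_mono f_lip v lb us)
      also have "\<dots> \<le> K1 * (2 * \<eta>') + K1 * (\<eta>' + \<eta>')"
        using E C D K1 by (intro add_mono mult_left_mono) (auto simp: norm_minus_commute)
      finally show ?thesis by (simp add: algebra_simps)
    qed
    have "norm ((\<xi> e c - \<xi> \<epsilon> c) - (e - \<epsilon>) *\<^sub>R Z) \<le> K1 * (4 * \<eta>') * measure lborel {ce..c}"
      by (rule has_integral_bound_real[where S="{ce, c}", OF _ _ iG Gb]) (use K1 \<eta>' in auto)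
    also have "measure lborel {ce..c} = e - \<epsilon>" using ce by (simp add: ce_def c_def)
    finally have "norm ((\<xi> e c - \<xi> \<epsilon> c) - (e - \<epsilon>) *\<^sub>R Z) \<le> K1 * (4 * \<eta>') * (e - \<epsilon>)" .
    moreover have "(\<xi> e c - \<xi> \<epsilon> c) /\<^sub>R (e - \<epsilon>) - Z = ((\<xi> e c - \<xi> \<epsilon> c) - (e - \<epsilon>) *\<^sub>R Z) /\<^sub>R (e - \<epsilon>)"
      using e by (simp add: scaleR_diff_right)
    ultimately show ?thesis using e by (simp add: divide_simps mult.commute)
  qed
  show ?thesis
    unfolding vd_right_iff c_def[symmetric] Z_def[symmetric] xs_def[symmetric]
  proof (rule tendstoI)
    fix \<eta> :: real assume \<eta>: "0 < \<eta>"
    define \<eta>' where "\<eta>' = \<eta> / (8 * K1)"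
    have \<eta>': "0 < \<eta>'" using \<eta> K1 by (simp add: \<eta>'_def)
    have ev1: "\<forall>\<^sub>F s in at_left c. dist (u s) l < \<eta>'" using l \<eta>' unfolding c_def by (rule tendstoD)
    then obtain b1 where b1: "b1 < c" "\<And>s. b1 < s \<Longrightarrow> s < c \<Longrightarrow> dist (u s) l < \<eta>'"
      unfolding eventually_at_left_field by blast
    have "continuous_on {0..1} (\<xi> \<epsilon>)" using sols[OF se] unfolding sol_def by auto
    then obtain d2 where d2: "d2 > 0" "\<And>s. s \<in> {0..1} \<Longrightarrow> dist s c < d2 \<Longrightarrow> dist (\<xi> \<epsilon> s) (\<xi> \<epsilon> c) < \<eta>'"
      using c \<eta>' unfolding continuous_on_iff by (metis atLeastAtMost_iff less_eq_real_def)
    define d where "d = min (min (c - b1) d2) (min (\<tau> - \<epsilon>) (\<eta>' / (Mb + 1)))"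
    have d: "d > 0" using b1 d2 \<epsilon> \<eta>' Mb0 by (simp add: d_def)
    show "\<forall>\<^sub>F e in at \<epsilon> within {\<epsilon><..}. dist ((\<xi> e c - xs) /\<^sub>R (e - \<epsilon>)) Z < \<eta>"
      unfolding eventually_at_right_field
    proof (intro exI[of _ "\<epsilon> + d"] conjI allI impI)
      show "\<epsilon> + d > \<epsilon>" using d by simp
      fix e assume e: "\<epsilon> < e" "e < \<epsilon> + d"
      have "norm ((\<xi> e c - \<xi> \<epsilon> c) /\<^sub>R (e - \<epsilon>) - Z) \<le> K1 * (4 * \<eta>')"
      proof (rule key)
        show "\<epsilon> < e" "e \<le> \<tau>" using e by (auto simp: d_def)
        show "0 < \<eta>'" by (rule \<eta>')
        fix s assume s: "\<tau> - e < s" "s < c"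
        have "b1 < s" using s e by (auto simp: d_def c_def)
        then show "norm (u s - l) \<le> \<eta>'" using b1(2)[of s] s by (simp add: dist_norm)
      next
        fix s assume s: "\<tau> - e \<le> s" "s \<le> c"
        have "s \<in> {0..1}" using s e c by (auto simp: d_def c_def)
        moreover have "dist s c < d2" using s e by (auto simp: d_def c_def dist_real_def)
        ultimately show "norm (\<xi> \<epsilon> s - xs) \<le> \<eta>'" using d2(2)[of s] by (simp add: dist_norm xs_def)
      next
        have "e - \<epsilon> \<le> \<eta>' / (Mb + 1)" using e by (simp add: d_def)
        then have "(e - \<epsilon>) * Mb \<le> \<eta>' / (Mb + 1) * Mb" using Mb0 by (intro mult_right_mono) auto
        also have "\<dots> \<le> \<eta>'" using Mb0 \<eta>' by (simp add: field_simps)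
        finally show "(e - \<epsilon>) * Mb \<le> \<eta>'" .
      qed
      also have "\<dots> < \<eta>" using \<eta> K1 by (simp add: \<eta>'_def)
      finally show "dist ((\<xi> e c - xs) /\<^sub>R (e - \<epsilon>)) Z < \<eta>" by (simp add: dist_norm xs_def)
    qed
  qed
qed

end

definition nn :: "(nat \<Rightarrow> real) \<Rightarrow> bool" where "nn r \<longleftrightarrow> (\<forall>m. 0 \<le> r m)"

definition PR :: "nat \<Rightarrow> nat \<Rightarrow> (nat \<Rightarrow> real) \<Rightarrow> real" where
  "PR n N r = (\<Prod>m<n. (1 + r (Suc m)) ^ N)"

definition pb :: "nat \<Rightarrow> ((nat \<Rightarrow> real) \<Rightarrow> real) \<Rightarrow> bool" where
  "pb n F \<longleftrightarrow> (\<forall>r. nn r \<longrightarrow> 0 \<le> F r) \<and> (\<exists>C N. 0 \<le> C \<and> (\<forall>r. nn r \<longrightarrow> F r \<le> C * PR n N r))"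

lemma PR_ge1: "nn r \<Longrightarrow> 1 \<le> PR n N r"
  unfolding PR_def nn_def by (intro prod_ge_1 one_le_power) (auto simp: add_increasing2)

lemma PR_mono_N: "nn r \<Longrightarrow> N \<le> N' \<Longrightarrow> PR n N r \<le> PR n N' r"
  unfolding PR_def nn_def
  by (intro prod_mono conjI power_increasing) (auto simp: add_increasing2)

lemma PR_mono_n: assumes r: "nn r" and nn': "n \<le> n'" shows "PR n N r \<le> PR n' N r"
  using nn'
proof (induction n' rule: dec_induct)
  case (step k)
  have f1: "1 \<le> (1 + r (Suc k)) ^ N" using r unfolding nn_def by (intro one_le_power) (simp add: add_increasing2)
  have "PR k N r * 1 \<le> PR k N r * (1 + r (Suc k)) ^ N"
    using f1 PR_ge1[OF r, of k N] by (intro mult_left_mono) auto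
  then have "PR k N r \<le> PR k N r * (1 + r (Suc k)) ^ N" by simp
  also have "\<dots> = PR (Suc k) N r" by (simp add: PR_def)
  finally show ?case using step.IH by linarith
qed simp

lemma PR_mult: "PR n N r * PR n N' r = PR n (N + N') r"
  unfolding PR_def by (simp add: power_add prod.distrib)

lemma pbI: "(\<And>r. nn r \<Longrightarrow> 0 \<le> F r) \<Longrightarrow> 0 \<le> C \<Longrightarrow> (\<And>r. nn r \<Longrightarrow> F r \<le> C * PR n N r) \<Longrightarrow> pb n F"
  unfolding pb_def by blast

lemma pb_nonneg: "pb n F \<Longrightarrow> nn r \<Longrightarrow> 0 \<le> F r" unfolding pb_def by blast

lemma pb_const: "0 \<le> c \<Longrightarrow> pb n (\<lambda>r. c)"
  by (rule pbI[of _ c _ 0]) (auto simp: PR_def)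

lemma pb_var: assumes "1 \<le> k" "k \<le> n" shows "pb n (\<lambda>r. r k)"
proof (rule pbI[of _ 1 _ 1])
  fix r assume r: "nn r"
  then show "0 \<le> r k" by (simp add: nn_def)
  have "r k \<le> 1 + r (Suc (k - 1))" using assms by simp
  also have "\<dots> \<le> (\<Prod>m<n. (1 + r (Suc m)))"
  proof -
    have k: "k - 1 \<in> {..<n}" using assms by auto
    have "(\<Prod>m<n. (1 + r (Suc m))) = (1 + r (Suc (k - 1))) * (\<Prod>m\<in>{..<n} - {k - 1}. (1 + r (Suc m)))"
      by (rule prod.remove[OF finite_lessThan k])
    moreover have "1 \<le> (\<Prod>m\<in>{..<n} - {k - 1}. (1 + r (Suc m)))"
      using r unfolding nn_def by (intro prod_ge_1) (auto simp: add_increasing2)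
    moreover have "0 \<le> 1 + r (Suc (k - 1))" using r unfolding nn_def by (simp add: add_increasing2)
    ultimately show ?thesis by (metis mult_le_cancel_left1 order_less_le not_less)
  qed
  finally show "r k \<le> 1 * PR n 1 r" by (simp add: PR_def)
qed simp

lemma pb_add:
  assumes "pb n F" "pb n G" shows "pb n (\<lambda>r. F r + G r)"
proof -
  obtain C1 N1 where 1: "0 \<le> C1" "\<And>r. nn r \<Longrightarrow> F r \<le> C1 * PR n N1 r" using assms(1) unfolding pb_def by blast
  obtain C2 N2 where 2: "0 \<le> C2" "\<And>r. nn r \<Longrightarrow> G r \<le> C2 * PR n N2 r" using assms(2) unfolding pb_def by blast
  show ?thesis
  proof (rule pbI[of _ "C1 + C2" _ "N1 + N2"])
    fix r assume r: "nn r"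
    show "0 \<le> F r + G r" using pb_nonneg[OF assms(1) r] pb_nonneg[OF assms(2) r] by simp
    have "F r \<le> C1 * PR n (N1 + N2) r"
      using order_trans[OF 1(2)[OF r] mult_left_mono[OF PR_mono_N[OF r le_add1] 1(1)]] .
    moreover have "G r \<le> C2 * PR n (N1 + N2) r"
      using order_trans[OF 2(2)[OF r] mult_left_mono[OF PR_mono_N[OF r le_add2] 2(1)]] .
    ultimately show "F r + G r \<le> (C1 + C2) * PR n (N1 + N2) r" by (simp add: distrib_right)
  qed (use 1 2 in auto)
qed

lemma pb_mult:
  assumes "pb n F" "pb n G" shows "pb n (\<lambda>r. F r * G r)"
proof -
  obtain C1 N1 where 1: "0 \<le> C1" "\<And>r. nn r \<Longrightarrow> F r \<le> C1 * PR n N1 r" using assms(1) unfolding pb_def by blast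
  obtain C2 N2 where 2: "0 \<le> C2" "\<And>r. nn r \<Longrightarrow> G r \<le> C2 * PR n N2 r" using assms(2) unfolding pb_def by blast
  show ?thesis
  proof (rule pbI[of _ "C1 * C2" _ "N1 + N2"])
    fix r assume r: "nn r"
    show "0 \<le> F r * G r" using pb_nonneg[OF assms(1) r] pb_nonneg[OF assms(2) r] by simp
    have "F r * G r \<le> (C1 * PR n N1 r) * (C2 * PR n N2 r)"
      using 1(2)[OF r] 2(2)[OF r] pb_nonneg[OF assms(1) r] pb_nonneg[OF assms(2) r]
      by (intro mult_mono) auto
    also have "\<dots> = (C1 * C2) * PR n (N1 + N2) r" by (simp add: PR_mult[symmetric] ac_simps)
    finally show "F r * G r \<le> (C1 * C2) * PR n (N1 + N2) r" .
  qed (use 1 2 in auto)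
qed

lemma pb_pow: "pb n F \<Longrightarrow> pb n (\<lambda>r. F r ^ k)"
  by (induction k) (auto intro: pb_mult pb_const)

lemma pb_Suc:
  assumes "pb n F" shows "pb (Suc n) F"
proof -
  obtain C N where 1: "0 \<le> C" "\<And>r. nn r \<Longrightarrow> F r \<le> C * PR n N r" using assms unfolding pb_def by blast
  show ?thesis
  proof (rule pbI[of _ C _ N])
    fix r assume r: "nn r"
    show "0 \<le> F r" using pb_nonneg[OF assms r] .
    show "F r \<le> C * PR (Suc n) N r"
      using order_trans[OF 1(2)[OF r] mult_left_mono[OF PR_mono_n[OF r le_SucI[OF order_refl]] 1(1)]] .
  qed (use 1 in auto)
qed

lemma pb_le: "pb n F \<Longrightarrow> (\<And>r. nn r \<Longrightarrow> 0 \<le> G r \<and> G r \<le> F r) \<Longrightarrow> pb n G"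
  unfolding pb_def by (meson order_trans)

lemma prod_sum_lists:
  fixes x :: "nat \<Rightarrow> real"
  assumes K: "finite K"
  shows "(\<Prod>m<n. (\<Sum>k\<in>K. x m ^ k)) = (\<Sum>js\<in>{js. set js \<subseteq> K \<and> length js = n}. \<Prod>m<n. x m ^ (js ! m))"
proof (induction n arbitrary: x)
  case 0
  have "{js. set js \<subseteq> K \<and> length js = 0} = {[]}" by auto
  then show ?case by simp
next
  case (Suc n)
  let ?L = "{js. set js \<subseteq> K \<and> length js = n}"
  have inj: "inj_on (\<lambda>(xs, k). k # xs) (?L \<times> K)" by (auto simp: inj_on_def)
  have "(\<Prod>m<Suc n. (\<Sum>k\<in>K. x m ^ k)) = (\<Sum>k\<in>K. x 0 ^ k) * (\<Prod>m<n. (\<Sum>k\<in>K. x (Suc m) ^ k))"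
    by (rule prod.lessThan_Suc_shift)
  also have "\<dots> = (\<Sum>k\<in>K. x 0 ^ k) * (\<Sum>js\<in>?L. \<Prod>m<n. x (Suc m) ^ (js ! m))"
    using Suc.IH[of "\<lambda>m. x (Suc m)"] by simp
  also have "\<dots> = (\<Sum>k\<in>K. \<Sum>js\<in>?L. x 0 ^ k * (\<Prod>m<n. x (Suc m) ^ (js ! m)))"
    by (rule sum_product)
  also have "\<dots> = (\<Sum>js\<in>?L. \<Sum>k\<in>K. x 0 ^ k * (\<Prod>m<n. x (Suc m) ^ (js ! m)))"
    by (rule sum.swap)
  also have "\<dots> = (\<Sum>(js, k)\<in>?L \<times> K. x 0 ^ k * (\<Prod>m<n. x (Suc m) ^ (js ! m)))"
    by (rule sum.cartesian_product)
  also have "\<dots> = (\<Sum>(js, k)\<in>?L \<times> K. \<Prod>m<Suc n. x m ^ ((k # js) ! m))"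
    by (intro sum.cong refl) (auto simp del: prod.lessThan_Suc simp add: prod.lessThan_Suc_shift)
  also have "\<dots> = (\<Sum>js\<in>(\<lambda>(xs, k). k # xs) ` (?L \<times> K). \<Prod>m<Suc n. x m ^ (js ! m))"
    by (subst sum.reindex[OF inj]) (simp add: case_prod_beta)
  also have "(\<lambda>(xs, k). k # xs) ` (?L \<times> K) = {js. set js \<subseteq> K \<and> length js = Suc n}"
    by (rule lists_length_Suc_eq[symmetric])
  finally show ?case .
qed

lemma one_plus_pow: "0 \<le> (x::real) \<Longrightarrow> (1 + x) ^ N \<le> 2 ^ N * (1 + x ^ N)"
proof (cases "x \<le> 1")
  case True
  assume x: "0 \<le> x"
  have "(1 + x) ^ N \<le> 2 ^ N" using True x by (intro power_mono) auto
  also have "\<dots> \<le> 2 ^ N * (1 + x ^ N)" using x by simp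
  finally show ?thesis .
next
  case False
  assume x: "0 \<le> x"
  have "(1 + x) ^ N \<le> (2 * x) ^ N" using False x by (intro power_mono) auto
  also have "\<dots> = 2 ^ N * x ^ N" by (simp add: power_mult_distrib)
  also have "\<dots> \<le> 2 ^ N * (1 + x ^ N)" by simp
  finally show ?thesis .
qed

lemma pb_sum_form:
  assumes "pb n F"
  shows "\<exists>L \<beta>. finite L \<and> (\<forall>js\<in>L. length js = n \<and> 0 < \<beta> js) \<and>
     (\<forall>r. nn r \<longrightarrow> F r \<le> (\<Sum>js\<in>L. \<beta> js * (\<Prod>m<n. r (m + 1) ^ (js ! m))))"
proof -
  obtain C N where 1: "0 \<le> C" "\<And>r. nn r \<Longrightarrow> F r \<le> C * PR n N r" using assms unfolding pb_def by blast
  define N' where "N' = Suc N"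
  define L where "L = {js. set js \<subseteq> {0, N'} \<and> length js = n}"
  define B where "B = (C + 1) * 2 ^ (N' * n)"
  have B: "0 < B" unfolding B_def using 1 by simp
  have "F r \<le> (\<Sum>js\<in>L. B * (\<Prod>m<n. r (m + 1) ^ (js ! m)))" if r: "nn r" for r
  proof -
    have r0: "0 \<le> r m" for m using r by (simp add: nn_def)
    have "F r \<le> C * PR n N' r" unfolding N'_def
      using order_trans[OF 1(2)[OF r] mult_left_mono[OF PR_mono_N[OF r le_SucI[OF order_refl]] 1(1)]] .
    also have "PR n N' r \<le> (\<Prod>m<n. 2 ^ N' * (1 + r (Suc m) ^ N'))"
      unfolding PR_def using r0 by (intro prod_mono conjI one_plus_pow) (auto simp: add_increasing2)
    also have "\<dots> = (\<Prod>m<n. 2 ^ N') * (\<Prod>m<n. (1 + r (Suc m) ^ N'))"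
      by (rule prod.distrib)
    also have "(\<Prod>m<n. (2::real) ^ N') = 2 ^ (N' * n)" by (simp add: power_mult)
    also have "(\<Prod>m<n. (1 + r (Suc m) ^ N')) = (\<Prod>m<n. (\<Sum>k\<in>{0, N'}. r (Suc m) ^ k))"
      by (simp add: N'_def)
    also have "(\<Prod>m<n. (\<Sum>k\<in>{0, N'}. r (Suc m) ^ k)) = (\<Sum>js\<in>L. \<Prod>m<n. r (m + 1) ^ (js ! m))"
      unfolding L_def using prod_sum_lists[of "{0, N'}" "\<lambda>m. r (Suc m)" n] by simp
    finally have "F r \<le> C * (2 ^ (N' * n) * (\<Sum>js\<in>L. \<Prod>m<n. r (m + 1) ^ (js ! m)))"
      using 1(1) by (simp add: mult_left_mono)
    also have "\<dots> \<le> B * (\<Sum>js\<in>L. \<Prod>m<n. r (m + 1) ^ (js ! m))"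
    proof -
      have "0 \<le> 2 ^ (N' * n) * (\<Sum>js\<in>L. \<Prod>m<n. r (m + 1) ^ (js ! m))"
        using r0 by (intro mult_nonneg_nonneg sum_nonneg prod_nonneg zero_le_power) auto
      then have "C * (2 ^ (N' * n) * (\<Sum>js\<in>L. \<Prod>m<n. r (m + 1) ^ (js ! m)))
          \<le> (C + 1) * (2 ^ (N' * n) * (\<Sum>js\<in>L. \<Prod>m<n. r (m + 1) ^ (js ! m)))"
        by (intro mult_right_mono) auto
      then show ?thesis unfolding B_def by (simp add: mult.assoc)
    qed
    also have "\<dots> = (\<Sum>js\<in>L. B * (\<Prod>m<n. r (m + 1) ^ (js ! m)))" by (simp add: sum_distrib_left)
    finally show ?thesis .
  qed
  moreover have "finite L" unfolding L_def by (rule finite_lists_length_eq) simp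
  ultimately show ?thesis using B unfolding L_def by (intro exI[of _ L] exI[of _ "\<lambda>_. B"]) (auto simp: L_def)
qed

lemma chain_vd:
  assumes d: "(\<phi> has_vector_derivative z) (at \<epsilon> within S)"
    and D: "\<And>x. (\<psi> has_derivative blinfun_apply (\<Psi> x)) (at x)"
  shows "((\<lambda>e. \<psi> (\<phi> e)) has_vector_derivative blinfun_apply (\<Psi> (\<phi> \<epsilon>)) z) (at \<epsilon> within S)"
proof -
  have "((\<lambda>e. \<psi> (\<phi> e)) has_derivative (\<lambda>h. blinfun_apply (\<Psi> (\<phi> \<epsilon>)) (h *\<^sub>R z))) (at \<epsilon> within S)"
    using has_derivative_compose[OF d[unfolded has_vector_derivative_def] D] .
  then show ?thesis unfolding has_vector_derivative_def by (simp add: blinfun.scaleR_right)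
qed

lemma vd_transfer:
  fixes \<phi> \<psi> :: "real \<Rightarrow> 'a::real_normed_vector"
  assumes "(\<phi> has_vector_derivative Z) (at \<epsilon> within {\<epsilon><..})" "0 < d"
    "\<And>e. \<epsilon> \<le> e \<Longrightarrow> e \<le> \<epsilon> + d \<Longrightarrow> \<phi> e = \<psi> e"
  shows "(\<psi> has_vector_derivative Z) (at \<epsilon> within {\<epsilon><..})"
proof -
  have ev: "\<forall>\<^sub>F e in at_right \<epsilon>. (\<phi> e - \<phi> \<epsilon>) /\<^sub>R (e - \<epsilon>) = (\<psi> e - \<psi> \<epsilon>) /\<^sub>R (e - \<epsilon>)"
    unfolding eventually_at_right_field using assms(2,3) by (intro exI[of _ "\<epsilon> + d"]) auto
  show ?thesis using assms(1) unfolding vd_right_iff using tendsto_cong[OF ev] by blast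
qed

lemma left_limit:
  assumes u: "u \<in> admissible_controls T \<rho>" and s: "0 < s" "s \<le> real T"
  shows "\<exists>l. (u \<longlongrightarrow> l) (at_left s) \<and> l \<in> cball 0 \<rho>"
proof -
  obtain S where S: "finite S" "\<forall>t\<in>{0..real T} - S. continuous (at t within {0..real T}) u"
    "\<forall>s\<in>S. (0 < s \<longrightarrow> (\<exists>l. (u \<longlongrightarrow> l) (at_left s))) \<and> (s < real T \<longrightarrow> (\<exists>l. (u \<longlongrightarrow> l) (at_right s)))"
    using u unfolding admissible_controls_def piecewise_continuous_on_def by blast
  have ub: "\<forall>t\<in>{0..real T}. norm (u t) \<le> \<rho>" using u unfolding admissible_controls_def by blast
  obtain l where l: "(u \<longlongrightarrow> l) (at_left s)"
  proof (cases "s \<in> S")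
    case True then show ?thesis using S(3) s that by blast
  next
    case False
    then have "continuous (at s within {0..real T}) u" using S(2) s by auto
    then have "(u \<longlongrightarrow> u s) (at s within {0..real T})" by (simp add: continuous_within)
    then have "(u \<longlongrightarrow> u s) (at s within {0..s})" by (rule tendsto_within_subset) (use s in auto)
    then have "(u \<longlongrightarrow> u s) (at_left s)" using at_within_Icc_at_left[OF s(1)] by simp
    then show ?thesis using that by blast
  qed
  moreover have "l \<in> cball 0 \<rho>"
  proof (rule Lim_in_closed_set[OF closed_cball _ _ l])
    show "\<forall>\<^sub>F x in at_left s. u x \<in> cball 0 \<rho>"
      unfolding eventually_at_left_field using s ub by (intro exI[of _ 0]) auto
  qed (simp add: trivial_limit_at_left_real)
  ultimately show ?thesis by blast
qed

definition gpoly :: "real \<Rightarrow> real \<Rightarrow> real \<Rightarrow> real \<Rightarrow> nat \<Rightarrow> nat \<Rightarrow> real \<Rightarrow> real \<Rightarrow> real" where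
  "gpoly K2 K3 K4 K5 L1 L2 x y = K2 + K3 * x ^ L1 + K4 * y ^ L2 + K5 * x ^ L1 * y ^ L2"

lemma gpoly_mono:
  assumes "0 \<le> K2" "0 \<le> K3" "0 \<le> K4" "0 \<le> K5" "0 \<le> x" "x \<le> x'" "0 \<le> y"
  shows "gpoly K2 K3 K4 K5 L1 L2 x y \<le> gpoly K2 K3 K4 K5 L1 L2 x' y"
proof -
  have p: "x ^ L1 \<le> x' ^ L1" using assms by (intro power_mono) auto
  have "K3 * x ^ L1 \<le> K3 * x' ^ L1" using p assms by (intro mult_left_mono) auto
  moreover have "K5 * x ^ L1 * y ^ L2 \<le> K5 * x' ^ L1 * y ^ L2"
    using p assms by (intro mult_right_mono mult_left_mono) auto
  ultimately show ?thesis unfolding gpoly_def by linarith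
qed

lemma gpoly_nonneg:
  "0 \<le> K2 \<Longrightarrow> 0 \<le> K3 \<Longrightarrow> 0 \<le> K4 \<Longrightarrow> 0 \<le> K5 \<Longrightarrow> 0 \<le> x \<Longrightarrow> 0 \<le> y \<Longrightarrow> 0 \<le> gpoly K2 K3 K4 K5 L1 L2 x y"
  unfolding gpoly_def by (intro add_nonneg_nonneg mult_nonneg_nonneg zero_le_power) auto

lemma pb_gpoly:
  assumes K: "0 \<le> K2" "0 \<le> K3" "0 \<le> K4" "0 \<le> K5" and F: "pb n F" and k: "1 \<le> k" "k \<le> n"
  shows "pb n (\<lambda>r. gpoly K2 K3 K4 K5 L1 L2 (F r) (r k))"
  unfolding gpoly_def
  by (intro pb_add pb_mult pb_const pb_pow F pb_var k K)

primrec Bx :: "(real \<Rightarrow> real \<Rightarrow> real) \<Rightarrow> real \<Rightarrow> real \<Rightarrow> real \<Rightarrow> nat \<Rightarrow> (nat \<Rightarrow> real) \<Rightarrow> real" where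
  "Bx G R M E 0 r = R"
| "Bx G R M E (Suc k) r = (G (Bx G R M E k r) (r (Suc k)) + M) * E"

primrec Bz :: "(real \<Rightarrow> real \<Rightarrow> real) \<Rightarrow> (nat \<Rightarrow> (nat \<Rightarrow> real) \<Rightarrow> real) \<Rightarrow> real \<Rightarrow> real \<Rightarrow> nat \<Rightarrow> (nat \<Rightarrow> real) \<Rightarrow> real" where
  "Bz G X Z E 0 r = Z"
| "Bz G X Z E (Suc k) r = G (X k r) (r (Suc k)) * Bz G X Z E k r * E"

lemma pb_Bx:
  assumes K: "0 \<le> K2" "0 \<le> K3" "0 \<le> K4" "0 \<le> K5" and "0 \<le> R" "0 \<le> M" "0 \<le> E"
  shows "pb k (Bx (gpoly K2 K3 K4 K5 L1 L2) R M E k)"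
proof (induction k)
  case 0 then show ?case using assms by (simp add: pb_const)
next
  case (Suc k)
  have "pb (Suc k) (\<lambda>r. gpoly K2 K3 K4 K5 L1 L2 (Bx (gpoly K2 K3 K4 K5 L1 L2) R M E k r) (r (Suc k)))"
    by (rule pb_gpoly[OF K pb_Suc[OF Suc.IH]]) auto
  then show ?case using assms by (simp add: pb_add pb_mult pb_const)
qed

lemma pb_Bz:
  assumes K: "0 \<le> K2" "0 \<le> K3" "0 \<le> K4" "0 \<le> K5" and "0 \<le> R" "0 \<le> M" "0 \<le> E" "0 \<le> Z"
  shows "pb k (Bz (gpoly K2 K3 K4 K5 L1 L2) (Bx (gpoly K2 K3 K4 K5 L1 L2) R M E) Z E k)"
proof (induction k)
  case 0 then show ?case using assms by (simp add: pb_const)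
next
  case (Suc k)
  have "pb (Suc k) (\<lambda>r. gpoly K2 K3 K4 K5 L1 L2 (Bx (gpoly K2 K3 K4 K5 L1 L2) R M E k r) (r (Suc k)))"
    by (rule pb_gpoly[OF K pb_Suc[OF pb_Bx[OF K assms(5-7)]]]) auto
  then show ?case using assms by (simp add: pb_mult pb_const pb_Suc[OF Suc.IH])
qed

theorem proposition11:
  fixes f :: "'x::euclidean_space \<Rightarrow> 'u::euclidean_space \<Rightarrow> 'x"
    and f' :: "'x \<times> 'u \<Rightarrow> ('x \<times> 'u) \<Rightarrow>\<^sub>L 'x"
    and g :: "'x \<Rightarrow> 'y::euclidean_space \<Rightarrow> 'x"
    and g' :: "'x \<Rightarrow> 'y \<Rightarrow> 'x \<Rightarrow>\<^sub>L 'x"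
    and c :: "'x \<Rightarrow> 'u \<Rightarrow> real"
    and c' :: "'x \<Rightarrow> 'u \<Rightarrow> 'x \<Rightarrow>\<^sub>L real"
    and h :: "'x \<Rightarrow> real"
    and h' :: "'x \<Rightarrow> 'x \<Rightarrow>\<^sub>L real"
    and T L1 L2 L3 :: nat
    and \<rho> K1 K2 K3 K4 K5 K6 K7 \<tau> :: real
    and x0 :: 'x and v :: 'u
  assumes T_pos: "0 < T"
    and rho_pos: "0 < \<rho>"
    and f_C1: "\<And>p. ((\<lambda>q. f (fst q) (snd q)) has_derivative blinfun_apply (f' p)) (at p)"
    and f'_cont: "continuous_on UNIV f'"
    and K1: "1 \<le> K1"
    and f_lip: "\<And>x1 x2 u1 u2. u1 \<in> cball 0 \<rho> \<Longrightarrow> u2 \<in> cball 0 \<rho> \<Longrightarrow>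
                 norm (f x1 u1 - f x2 u2) \<le> K1 * (norm (x1 - x2) + norm (u1 - u2))"
    and g_cont: "continuous_on UNIV (\<lambda>p. g (fst p) (snd p))"
    and g_diff: "\<And>x y. ((\<lambda>z. g z y) has_derivative blinfun_apply (g' x y)) (at x)"
    and K2345: "0 \<le> K2" "0 \<le> K3" "0 \<le> K4" "0 \<le> K5"
    and L12: "0 < L1" "0 < L2"
    and g_bound: "\<And>x y. norm (g x y) \<le> K2 + K3 * norm x ^ L1 + K4 * norm y ^ L2
                                        + K5 * norm x ^ L1 * norm y ^ L2"
    and g'_bound: "\<And>x y. norm (g' x y) \<le> K2 + K3 * norm x ^ L1 + K4 * norm y ^ L2
                                        + K5 * norm x ^ L1 * norm y ^ L2"
    and c_cont: "continuous_on UNIV (\<lambda>p. c (fst p) (snd p))"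
    and c_diff: "\<And>x u. ((\<lambda>z. c z u) has_derivative blinfun_apply (c' x u)) (at x)"
    and c'_cont: "continuous_on UNIV (\<lambda>p. c' (fst p) (snd p))"
    and h_diff: "\<And>x. (h has_derivative blinfun_apply (h' x)) (at x)"
    and K67: "0 \<le> K6" "0 \<le> K7"
    and L3: "0 < L3"
    and c_bound: "\<And>x u. u \<in> cball 0 \<rho> \<Longrightarrow> \<bar>c x u\<bar> \<le> K6 + K7 * norm x ^ L3"
    and c'_bound: "\<And>x u. u \<in> cball 0 \<rho> \<Longrightarrow> norm (c' x u) \<le> K6 + K7 * norm x ^ L3"
    and h_bound: "\<And>x. \<bar>h x\<bar> \<le> K6 + K7 * norm x ^ L3"
    and h'_bound: "\<And>x. norm (h' x) \<le> K6 + K7 * norm x ^ L3"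
    and tau: "0 < \<tau>" "\<tau> < 1"
    and v: "v \<in> cball 0 \<rho>"
  shows "\<exists>(\<beta>1::real) (\<L>::nat \<Rightarrow> nat list set) (\<beta>::nat \<Rightarrow> nat list \<Rightarrow> real).
     0 < \<beta>1 \<and>
     (\<forall>i\<in>{2..T+1}. finite (\<L> i) \<and> (\<forall>js\<in>\<L> i. length js = i - 1 \<and> 0 < \<beta> i js)) \<and>
     (\<forall>u\<in>admissible_controls T \<rho>. continuous (at_left \<tau>) u \<longrightarrow>
      (\<forall>(ys::nat \<Rightarrow> 'y) (\<epsilon>::real) (X::real \<Rightarrow> nat \<Rightarrow> real \<Rightarrow> 'x).
        0 \<le> \<epsilon> \<longrightarrow> \<epsilon> < \<tau> \<longrightarrow>
        (\<forall>e\<in>{0..\<tau>}. hybrid_modes f g T x0 ys (needle u v \<tau> e) (X e)) \<longrightarrow>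
        (\<forall>t\<in>{\<tau><..1}. \<exists>D. ((\<lambda>e. c (X e 1 t) (needle u v \<tau> e t)) has_real_derivative D)
                                 (at_right \<epsilon>) \<and> \<bar>D\<bar> \<le> \<beta>1) \<and>
        (\<forall>i\<in>{2..T}. \<forall>t\<in>{real i - 1..real i}.
           \<exists>D. ((\<lambda>e. c (X e i t) (needle u v \<tau> e t)) has_real_derivative D) (at_right \<epsilon>) \<and>
               \<bar>D\<bar> \<le> (\<Sum>js\<in>\<L> i. \<beta> i js * (\<Prod>m<i - 1. norm (ys (m + 1)) ^ (js ! m)))) \<and>
        (\<exists>D. ((\<lambda>e. h (g (X e T (real T)) (ys T))) has_real_derivative D) (at_right \<epsilon>) \<and>
               \<bar>D\<bar> \<le> (\<Sum>js\<in>\<L> (T+1). \<beta> (T+1) js * (\<Prod>m<T. norm (ys (m + 1)) ^ (js ! m))))))"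
proof -
  interpret sys f f' \<rho> K1
    by unfold_locales (auto intro: rho_pos f_C1 f'_cont K1 f_lip)
  define G where "G = gpoly K2 K3 K4 K5 L1 L2"
  define E where "E = exp K1"
  define R1 where "R1 = (norm x0 + M0) * E"
  define Z0 where "Z0 = 2 * K1 * \<rho> * E"
  define BX where "BX = Bx G R1 M0 E"
  define BZ where "BZ = Bz G BX Z0 E"
  define \<beta>1 where "\<beta>1 = (K6 + K7 * R1 ^ L3) * Z0 + 1"
  define P where "P i r = (if i = T + 1
      then (K6 + K7 * G (BX (T - 1) r) (r T) ^ L3) * (G (BX (T - 1) r) (r T) * BZ (T - 1) r)
      else (K6 + K7 * BX (i - 1) r ^ L3) * BZ (i - 1) r)" for i r
  have E0: "0 \<le> E" unfolding E_def by simp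
  have R10: "0 \<le> R1" unfolding R1_def using E0 M0_nonneg by simp
  have Z00: "0 \<le> Z0" unfolding Z0_def using E0 K1 rho_pos by simp
  have pbBX: "pb k (BX k)" for k
    unfolding BX_def G_def by (rule pb_Bx[OF K2345 R10 M0_nonneg E0])
  have pbBZ: "pb k (BZ k)" for k
    unfolding BZ_def BX_def G_def by (rule pb_Bz[OF K2345 R10 M0_nonneg E0 Z00])
  have pbP: "pb (i - 1) (P i)" if i: "i \<in> {2..T+1}" for i
  proof (cases "i = T + 1")
    case True
    have T': "Suc (T - 1) = T" using T_pos by simp
    have "pb T (\<lambda>r. G (BX (T - 1) r) (r T))"
      unfolding G_def by (rule pb_gpoly[OF K2345]) (use pb_Suc[OF pbBX[of "T - 1"]] T' T_pos in auto)
    moreover have "pb T (BZ (T - 1))" using pb_Suc[OF pbBZ[of "T - 1"]] T' by simp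
    ultimately have "pb T (\<lambda>r. (K6 + K7 * G (BX (T - 1) r) (r T) ^ L3) * (G (BX (T - 1) r) (r T) * BZ (T - 1) r))"
      using K67 by (intro pb_mult pb_add pb_const pb_pow) auto
    moreover have "P i = (\<lambda>r. (K6 + K7 * G (BX (T - 1) r) (r T) ^ L3) * (G (BX (T - 1) r) (r T) * BZ (T - 1) r))"
      using True by (simp add: P_def fun_eq_iff)
    ultimately show ?thesis using True by simp
  next
    case False
    have "pb (i - 1) (\<lambda>r. (K6 + K7 * BX (i - 1) r ^ L3) * BZ (i - 1) r)"
      using K67 by (intro pb_mult pb_add pb_const pb_pow pbBX pbBZ) auto
    moreover have "P i = (\<lambda>r. (K6 + K7 * BX (i - 1) r ^ L3) * BZ (i - 1) r)"
      using False by (simp add: P_def fun_eq_iff)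
    ultimately show ?thesis by simp
  qed
  have "\<forall>i\<in>{2..T+1}. \<exists>L \<beta>. finite L \<and> (\<forall>js\<in>L. length js = i - 1 \<and> 0 < \<beta> js) \<and>
     (\<forall>r. nn r \<longrightarrow> P i r \<le> (\<Sum>js\<in>L. \<beta> js * (\<Prod>m<i - 1. r (m + 1) ^ (js ! m))))"
  proof
    fix i assume i: "i \<in> {2..T+1}"
    show "\<exists>L \<beta>. finite L \<and> (\<forall>js\<in>L. length js = i - 1 \<and> 0 < \<beta> js) \<and>
     (\<forall>r. nn r \<longrightarrow> P i r \<le> (\<Sum>js\<in>L. \<beta> js * (\<Prod>m<i - 1. r (m + 1) ^ (js ! m))))"
      by (rule pb_sum_form[OF pbP[OF i]])
  qed
  then have "\<exists>Lf. \<forall>i\<in>{2..T+1}. \<exists>\<beta>. finite (Lf i) \<and> (\<forall>js\<in>Lf i. length js = i - 1 \<and> 0 < \<beta> js) \<and>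
     (\<forall>r. nn r \<longrightarrow> P i r \<le> (\<Sum>js\<in>Lf i. \<beta> js * (\<Prod>m<i - 1. r (m + 1) ^ (js ! m))))"
    by (rule bchoice)
  then obtain Lf where "\<forall>i\<in>{2..T+1}. \<exists>\<beta>. finite (Lf i) \<and> (\<forall>js\<in>Lf i. length js = i - 1 \<and> 0 < \<beta> js) \<and>
     (\<forall>r. nn r \<longrightarrow> P i r \<le> (\<Sum>js\<in>Lf i. \<beta> js * (\<Prod>m<i - 1. r (m + 1) ^ (js ! m))))"
    by blast
  then have "\<exists>\<beta>f. \<forall>i\<in>{2..T+1}. finite (Lf i) \<and> (\<forall>js\<in>Lf i. length js = i - 1 \<and> 0 < \<beta>f i js) \<and>
     (\<forall>r. nn r \<longrightarrow> P i r \<le> (\<Sum>js\<in>Lf i. \<beta>f i js * (\<Prod>m<i - 1. r (m + 1) ^ (js ! m))))"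
    by (rule bchoice)
  then obtain \<beta>f where Lf: "\<forall>i\<in>{2..T+1}. finite (Lf i) \<and> (\<forall>js\<in>Lf i. length js = i - 1 \<and> 0 < \<beta>f i js) \<and>
     (\<forall>r. nn r \<longrightarrow> P i r \<le> (\<Sum>js\<in>Lf i. \<beta>f i js * (\<Prod>m<i - 1. r (m + 1) ^ (js ! m))))"
    by blast
  have \<beta>1: "0 < \<beta>1" unfolding \<beta>1_def using K67 R10 Z00 by (simp add: add_nonneg_pos)
  have LfFin: "\<forall>i\<in>{2..T+1}. finite (Lf i) \<and> (\<forall>js\<in>Lf i. length js = i - 1 \<and> 0 < \<beta>f i js)" using Lf by blast
  show ?thesis
  proof (rule exI[of _ \<beta>1], rule exI[of _ Lf], rule exI[of _ \<beta>f], rule conjI[OF \<beta>1], rule conjI[OF LfFin],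
      intro ballI impI allI)
    fix u :: "real \<Rightarrow> 'u" and ys :: "nat \<Rightarrow> 'y" and \<epsilon> :: real and X :: "real \<Rightarrow> nat \<Rightarrow> real \<Rightarrow> 'x"
    assume uadm: "u \<in> admissible_controls T \<rho>" and "continuous (at_left \<tau>) u"
      and \<epsilon>0: "0 \<le> \<epsilon>" and \<epsilon>\<tau>: "\<epsilon> < \<tau>"
      and hyb: "\<forall>e\<in>{0..\<tau>}. hybrid_modes f g T x0 ys (needle u v \<tau> e) (X e)"
    define r where "r m = norm (ys m)" for m
    have nnr: "nn r" unfolding nn_def r_def by simp
    have ub: "u s \<in> cball 0 \<rho>" if "s \<in> {0..real T}" for s
      using uadm that unfolding admissible_controls_def by auto
    have T1: "1 \<le> real T" using T_pos by simp
    have nbd: "needle u v \<tau> e s \<in> cball 0 \<rho>" if "s \<in> {0..1}" for e s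
      using ub[of s] that T1 v by (auto simp: needle_def)
    have nu: "needle u v \<tau> e s = u s" if "\<tau> < s" for e s using that by (simp add: needle_def)
    have m1: "sol (needle u v \<tau> e) 0 1 (X e 1) \<and> X e 1 0 = x0" if "e \<in> {0..\<tau>}" for e
      using hyb that ode_sol_on_sol unfolding hybrid_modes_def by blast
    have mi: "sol u (real i - 1) (real i) (X e i) \<and> X e i (real i - 1) = g (X e (i - 1) (real i - 1)) (ys (i - 1))"
      if e: "e \<in> {0..\<tau>}" and i: "i \<in> {2..T}" for e i
    proof -
      have "ode_sol_on f (needle u v \<tau> e) (real i - 1) (real i) (g (X e (i - 1) (real i - 1)) (ys (i - 1))) (X e i)"
        using hyb e i unfolding hybrid_modes_def by blast
      then have s: "sol (needle u v \<tau> e) (real i - 1) (real i) (X e i)"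
        and x: "X e i (real i - 1) = g (X e (i - 1) (real i - 1)) (ys (i - 1))"
        using ode_sol_on_sol by blast+
      have "sol u (real i - 1) (real i) (X e i)"
      proof (rule sol_cong[OF finite.emptyI _ s])
        fix s assume "s \<in> {real i - 1..real i}"
        moreover have "real i - 1 \<ge> 1" using i by auto
        ultimately show "needle u v \<tau> e s = u s" using tau by (intro nu) auto
      qed
      then show ?thesis using x by blast
    qed
    have C: "(\<forall>e\<in>{0..\<tau>}. \<forall>t\<in>{real k..real k + 1}. norm (X e (Suc k) t) \<le> BX k r) \<and>
       (\<forall>t\<in>{real k..real k + 1}. (k = 0 \<longrightarrow> \<tau> < t) \<longrightarrow>
          (\<exists>z. ((\<lambda>e. X e (Suc k) t) has_vector_derivative z) (at \<epsilon> within {\<epsilon><..}) \<and> norm z \<le> BZ k r))"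
      if "k < T" for k
      using that
    proof (induction k)
      case 0
      have bnd: "\<forall>e\<in>{0..\<tau>}. \<forall>t\<in>{real 0..real 0 + 1}. norm (X e (Suc 0) t) \<le> BX 0 r"
      proof (intro ballI)
        fix e t assume e: "e \<in> {0..\<tau>}" and t: "t \<in> {real 0..real 0 + 1}"
        have "norm (X e 1 t) \<le> (norm (X e 1 0) + M0) * exp K1"
          by (rule sol_bound[OF conjunct1[OF m1[OF e]]]) (use t nbd in auto)
        then show "norm (X e (Suc 0) t) \<le> BX 0 r" using m1[OF e] by (simp add: BX_def R1_def E_def)
      qed
      have der: "\<exists>z. ((\<lambda>e. X e (Suc 0) t) has_vector_derivative z) (at \<epsilon> within {\<epsilon><..}) \<and> norm z \<le> BZ 0 r"
        if t: "t \<in> {real 0..real 0 + 1}" "\<tau> < t" for t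
      proof -
        define c where "c = \<tau> - \<epsilon>"
        define wt where "wt s = (if s \<le> \<tau> then v else u s)" for s
        have c: "0 < c" "c \<le> real T" using \<epsilon>0 \<epsilon>\<tau> tau T1 by (auto simp: c_def)
        obtain l where l: "(u \<longlongrightarrow> l) (at_left c)" "l \<in> cball 0 \<rho>"
          using left_limit[OF uadm c] by blast
        have u01: "\<And>s. s \<in> {0..1} \<Longrightarrow> u s \<in> cball 0 \<rho>" using ub T1 by auto
        have d0: "((\<lambda>e. X e 1 c) has_vector_derivative (f (X \<epsilon> 1 c) v - f (X \<epsilon> 1 c) l)) (at \<epsilon> within {\<epsilon><..})"
          unfolding c_def
          by (rule needle_init[of u v \<epsilon> \<tau> "\<lambda>e. X e 1" x0 l, OF u01 v \<epsilon>0 \<epsilon>\<tau> _ m1 _ l(2)])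
             (use tau l(1) c_def in auto)
        have sols: "sol wt c 1 (X e 1)" if e: "e \<in> {\<epsilon>..\<tau>}" for e
        proof -
          have e': "e \<in> {0..\<tau>}" using e \<epsilon>0 by auto
          have sn: "sol (needle u v \<tau> e) c 1 (X e 1)"
            by (rule sol_shift[OF conjunct1[OF m1[OF e']]]) (use c tau \<epsilon>0 in \<open>auto simp: c_def\<close>)
          have eqw: "\<And>s. s \<in> {c..1} \<Longrightarrow> s \<notin> {c} \<Longrightarrow> needle u v \<tau> e s = wt s"
            using e by (auto simp: needle_def wt_def c_def)
          show ?thesis by (rule sol_cong[of "{c}", OF _ eqw sn]) simp_all
        qed
        have wb: "\<And>s. s \<in> {c..1} \<Longrightarrow> wt s \<in> cball 0 \<rho>" using v u01 c by (auto simp: wt_def)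
        obtain z where z: "((\<lambda>e. X e 1 t) has_vector_derivative z) (at \<epsilon> within {\<epsilon><..})"
          "norm z \<le> norm (f (X \<epsilon> 1 c) v - f (X \<epsilon> 1 c) l) * exp (K1 * (t - c))"
        proof -
          have tin: "t \<in> {c..1}" using t \<epsilon>0 by (auto simp: c_def)
          have c1: "c \<le> 1" using tin by auto
          show ?thesis using propagate[of c 1 wt \<epsilon> \<tau> "\<lambda>e. X e 1", OF c1 wb sols \<epsilon>\<tau> d0 tin] that by blast
        qed
        have "norm (f (X \<epsilon> 1 c) v - f (X \<epsilon> 1 c) l) \<le> K1 * (norm (X \<epsilon> 1 c - X \<epsilon> 1 c) + norm (v - l))"
          by (rule f_lip[OF v l(2)])
        also have "\<dots> \<le> K1 * (2 * \<rho>)"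
        proof -
          have "norm (v - l) \<le> norm v + norm l" by (rule norm_triangle_ineq4)
          also have "\<dots> \<le> 2 * \<rho>" using v l(2) by simp
          finally show ?thesis using K1 by (intro mult_left_mono) auto
        qed
        finally have Zb: "norm (f (X \<epsilon> 1 c) v - f (X \<epsilon> 1 c) l) \<le> K1 * (2 * \<rho>)" .
        have "exp (K1 * (t - c)) \<le> E"
        proof -
          have "K1 * (t - c) \<le> K1 * 1" using t c K1 \<epsilon>0 by (intro mult_left_mono) (auto simp: c_def)
          then show ?thesis unfolding E_def by simp
        qed
        then have "norm z \<le> K1 * (2 * \<rho>) * E"
          using z(2) Zb by (meson exp_ge_zero mult_mono norm_ge_zero order_trans)
        then show ?thesis using z(1) by (auto simp: BZ_def Z0_def)
      qed
      show ?case using bnd der by auto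
    next
      case (Suc k)
      have kT: "k < T" using Suc.prems by simp
      note IH = Suc.IH[OF kT]
      define i where "i = Suc (Suc k)"
      define a where "a = real k + 1"
      have i: "i \<in> {2..T}" using Suc.prems by (auto simp: i_def)
      have ai: "real i - 1 = a" "real i = a + 1" "i - 1 = Suc k" by (auto simp: i_def a_def)
      have mi': "sol u a (a + 1) (X e i) \<and> X e i a = g (X e (Suc k) a) (ys (Suc k))" if "e \<in> {0..\<tau>}" for e
        using mi[OF that i] ai by simp
      have ua: "\<And>s. s \<in> {a..a + 1} \<Longrightarrow> u s \<in> cball 0 \<rho>"
        using ub i by (auto simp: a_def i_def)
      have aIn: "a \<in> {real k..real k + 1}" by (simp add: a_def)
      have Gx: "norm (g x (ys (Suc k))) \<le> G (BX k r) (r (Suc k))" if "norm x \<le> BX k r" for x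
      proof -
        have "norm (g x (ys (Suc k))) \<le> G (norm x) (r (Suc k))"
          using g_bound[of x "ys (Suc k)"] by (simp add: G_def gpoly_def r_def)
        also have "\<dots> \<le> G (BX k r) (r (Suc k))"
          unfolding G_def using that by (intro gpoly_mono K2345) (auto simp: r_def)
        finally show ?thesis .
      qed
      have Gx': "norm (g' x (ys (Suc k))) \<le> G (BX k r) (r (Suc k))" if "norm x \<le> BX k r" for x
      proof -
        have "norm (g' x (ys (Suc k))) \<le> G (norm x) (r (Suc k))"
          using g'_bound[of x "ys (Suc k)"] by (simp add: G_def gpoly_def r_def)
        also have "\<dots> \<le> G (BX k r) (r (Suc k))"
          unfolding G_def using that by (intro gpoly_mono K2345) (auto simp: r_def)
        finally show ?thesis .
      qed
      have bnd: "\<forall>e\<in>{0..\<tau>}. \<forall>t\<in>{real (Suc k)..real (Suc k) + 1}. norm (X e (Suc (Suc k)) t) \<le> BX (Suc k) r"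
      proof (intro ballI)
        fix e t assume e: "e \<in> {0..\<tau>}" and t: "t \<in> {real (Suc k)..real (Suc k) + 1}"
        have "norm (X e i t) \<le> (norm (X e i a) + M0) * exp K1"
          by (rule sol_bound[OF conjunct1[OF mi'[OF e]] _ _ ua]) (use t in \<open>auto simp: a_def\<close>)
        also have "\<dots> \<le> (G (BX k r) (r (Suc k)) + M0) * exp K1"
          using Gx[of "X e (Suc k) a"] IH e aIn mi'[OF e] by (intro mult_right_mono add_right_mono) auto
        finally show "norm (X e (Suc (Suc k)) t) \<le> BX (Suc k) r" by (simp add: BX_def E_def i_def)
      qed
      have der: "\<exists>z. ((\<lambda>e. X e (Suc (Suc k)) t) has_vector_derivative z) (at \<epsilon> within {\<epsilon><..}) \<and> norm z \<le> BZ (Suc k) r"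
        if t: "t \<in> {real (Suc k)..real (Suc k) + 1}" for t
      proof -
        obtain z1 where z1: "((\<lambda>e. X e (Suc k) a) has_vector_derivative z1) (at \<epsilon> within {\<epsilon><..})" "norm z1 \<le> BZ k r"
        proof -
          have "k = 0 \<longrightarrow> \<tau> < a" using tau by (simp add: a_def)
          then show ?thesis using conjunct2[OF IH, rule_format, OF aIn] that by blast
        qed
        have dg: "((\<lambda>e. g (X e (Suc k) a) (ys (Suc k))) has_vector_derivative
            blinfun_apply (g' (X \<epsilon> (Suc k) a) (ys (Suc k))) z1) (at \<epsilon> within {\<epsilon><..})"
          by (rule chain_vd[OF z1(1) g_diff])
        have d0: "((\<lambda>e. X e i a) has_vector_derivative
            blinfun_apply (g' (X \<epsilon> (Suc k) a) (ys (Suc k))) z1) (at \<epsilon> within {\<epsilon><..})"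
          by (rule vd_transfer[OF dg, of "\<tau> - \<epsilon>"]) (use \<epsilon>\<tau> \<epsilon>0 mi' in auto)
        have sols: "sol u a (a + 1) (X e i)" if "e \<in> {\<epsilon>..\<tau>}" for e
          using mi' that \<epsilon>0 by auto
        obtain z where z: "((\<lambda>e. X e i t) has_vector_derivative z) (at \<epsilon> within {\<epsilon><..})"
          "norm z \<le> norm (blinfun_apply (g' (X \<epsilon> (Suc k) a) (ys (Suc k))) z1) * exp (K1 * (t - a))"
        proof -
          have tin: "t \<in> {a..a + 1}" using t by (auto simp: a_def)
          have a1: "a \<le> a + 1" by simp
          show ?thesis using propagate[of a "a + 1" u \<epsilon> \<tau> "\<lambda>e. X e i", OF a1 ua sols \<epsilon>\<tau> d0 tin] that by blast
        qed
        have xb: "norm (X \<epsilon> (Suc k) a) \<le> BX k r" using IH \<epsilon>0 \<epsilon>\<tau> aIn by auto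
        have "norm (blinfun_apply (g' (X \<epsilon> (Suc k) a) (ys (Suc k))) z1) \<le> norm (g' (X \<epsilon> (Suc k) a) (ys (Suc k))) * norm z1"
          by (rule norm_blinfun)
        also have "\<dots> \<le> G (BX k r) (r (Suc k)) * BZ k r"
        proof -
          have G0: "0 \<le> G (BX k r) (r (Suc k))" using Gx'[OF xb] by (meson norm_ge_zero order_trans)
          show ?thesis using Gx'[OF xb] z1(2) G0 by (intro mult_mono) auto
        qed
        finally have n0: "norm (blinfun_apply (g' (X \<epsilon> (Suc k) a) (ys (Suc k))) z1) \<le> G (BX k r) (r (Suc k)) * BZ k r" .
        have "exp (K1 * (t - a)) \<le> E"
        proof -
          have "K1 * (t - a) \<le> K1 * 1" using t K1 by (intro mult_left_mono) (auto simp: a_def)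
          then show ?thesis unfolding E_def by simp
        qed
        then have "norm z \<le> G (BX k r) (r (Suc k)) * BZ k r * E"
          using z(2) n0 by (meson exp_ge_zero mult_mono norm_ge_zero order_trans)
        then show ?thesis using z(1) by (auto simp: BZ_def i_def)
      qed
      show ?case using bnd der by blast
    qed
    have cder: "\<exists>D. ((\<lambda>e. c (X e i t) (needle u v \<tau> e t)) has_real_derivative D) (at_right \<epsilon>) \<and>
        \<bar>D\<bar> \<le> (K6 + K7 * norm (X \<epsilon> i t) ^ L3) * norm z"
      if z: "((\<lambda>e. X e i t) has_vector_derivative z) (at \<epsilon> within {\<epsilon><..})" and t: "\<tau> < t" "t \<le> real T"
      for i t z
    proof -
      have ut: "u t \<in> cball 0 \<rho>" using ub t tau by auto
      have "((\<lambda>e. c (X e i t) (u t)) has_vector_derivative blinfun_apply (c' (X \<epsilon> i t) (u t)) z) (at \<epsilon> within {\<epsilon><..})"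
        by (rule chain_vd[OF z c_diff])
      moreover have "(\<lambda>e. c (X e i t) (needle u v \<tau> e t)) = (\<lambda>e. c (X e i t) (u t))" using nu t by auto
      moreover have "\<bar>blinfun_apply (c' (X \<epsilon> i t) (u t)) z\<bar> \<le> (K6 + K7 * norm (X \<epsilon> i t) ^ L3) * norm z"
      proof -
        have "\<bar>blinfun_apply (c' (X \<epsilon> i t) (u t)) z\<bar> \<le> norm (c' (X \<epsilon> i t) (u t)) * norm z"
          using norm_blinfun[of "c' (X \<epsilon> i t) (u t)" z] by simp
        also have "\<dots> \<le> (K6 + K7 * norm (X \<epsilon> i t) ^ L3) * norm z"
          using c'_bound[OF ut] by (intro mult_right_mono) auto
        finally show ?thesis .
      qed
      ultimately show ?thesis by (auto simp: has_real_derivative_iff_has_vector_derivative)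
    qed
    have Kmono: "K6 + K7 * x ^ L3 \<le> K6 + K7 * y ^ L3" if "0 \<le> x" "x \<le> y" for x y
      using that K67 by (intro add_left_mono mult_left_mono power_mono) auto
    show "(\<forall>t\<in>{\<tau><..1}. \<exists>D. ((\<lambda>e. c (X e 1 t) (needle u v \<tau> e t)) has_real_derivative D) (at_right \<epsilon>) \<and> \<bar>D\<bar> \<le> \<beta>1) \<and>
        (\<forall>i\<in>{2..T}. \<forall>t\<in>{real i - 1..real i}.
           \<exists>D. ((\<lambda>e. c (X e i t) (needle u v \<tau> e t)) has_real_derivative D) (at_right \<epsilon>) \<and>
               \<bar>D\<bar> \<le> (\<Sum>js\<in>Lf i. \<beta>f i js * (\<Prod>m<i - 1. norm (ys (m + 1)) ^ (js ! m)))) \<and>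
        (\<exists>D. ((\<lambda>e. h (g (X e T (real T)) (ys T))) has_real_derivative D) (at_right \<epsilon>) \<and>
               \<bar>D\<bar> \<le> (\<Sum>js\<in>Lf (T+1). \<beta>f (T+1) js * (\<Prod>m<T. norm (ys (m + 1)) ^ (js ! m))))"
    proof (intro conjI ballI)
      fix t assume t: "t \<in> {\<tau><..1}"
      obtain z where z: "((\<lambda>e. X e (Suc 0) t) has_vector_derivative z) (at \<epsilon> within {\<epsilon><..})" "norm z \<le> BZ 0 r"
      proof -
        have t01: "t \<in> {real 0..real 0 + 1}" using t tau by auto
        show ?thesis using conjunct2[OF C[of 0], rule_format, OF _ t01] T_pos t that by auto
      qed
      obtain D where D: "((\<lambda>e. c (X e 1 t) (needle u v \<tau> e t)) has_real_derivative D) (at_right \<epsilon>)"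
        "\<bar>D\<bar> \<le> (K6 + K7 * norm (X \<epsilon> 1 t) ^ L3) * norm z"
        using cder[of 1 t z] z t T1 by auto
      have xb: "norm (X \<epsilon> 1 t) \<le> R1"
      proof -
        have t01: "t \<in> {real 0..real 0 + 1}" using t tau by auto
        have "\<epsilon> \<in> {0..\<tau>}" using \<epsilon>0 \<epsilon>\<tau> by auto
        then show ?thesis using conjunct1[OF C[of 0], rule_format, OF _ _ t01] T_pos by (auto simp: BX_def)
      qed
      have "(K6 + K7 * norm (X \<epsilon> 1 t) ^ L3) * norm z \<le> (K6 + K7 * R1 ^ L3) * Z0"
        using Kmono[OF norm_ge_zero xb] z(2) K67 R10 by (intro mult_mono) (auto simp: BZ_def)
      then have "\<bar>D\<bar> \<le> (K6 + K7 * R1 ^ L3) * Z0" using D(2) by linarith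
      then show "\<exists>D. ((\<lambda>e. c (X e 1 t) (needle u v \<tau> e t)) has_real_derivative D) (at_right \<epsilon>) \<and> \<bar>D\<bar> \<le> \<beta>1"
        using D(1) by (intro exI[of _ D]) (simp add: \<beta>1_def)
    next
      fix i t assume i: "i \<in> {2..T}" and t: "t \<in> {real i - 1..real i}"
      define k where "k = i - 1"
      have k: "Suc k = i" "real k = real i - 1" "k < T" "k \<noteq> 0" using i by (auto simp: k_def)
      have tk: "t \<in> {real k..real k + 1}" using t k by auto
      obtain z where z: "((\<lambda>e. X e i t) has_vector_derivative z) (at \<epsilon> within {\<epsilon><..})" "norm z \<le> BZ k r"
        using conjunct2[OF C[OF k(3)], rule_format, OF tk] k by auto
      have tT: "\<tau> < t" "t \<le> real T" using t i tau by auto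
      obtain D where D: "((\<lambda>e. c (X e i t) (needle u v \<tau> e t)) has_real_derivative D) (at_right \<epsilon>)"
        "\<bar>D\<bar> \<le> (K6 + K7 * norm (X \<epsilon> i t) ^ L3) * norm z"
        using cder[OF z(1) tT] by auto
      have xb: "norm (X \<epsilon> i t) \<le> BX k r" using conjunct1[OF C[OF k(3)], rule_format, OF _ tk] k \<epsilon>0 \<epsilon>\<tau> by auto
      have "\<bar>D\<bar> \<le> (K6 + K7 * BX k r ^ L3) * BZ k r"
      proof -
        have "(K6 + K7 * norm (X \<epsilon> i t) ^ L3) * norm z \<le> (K6 + K7 * BX k r ^ L3) * BZ k r"
        proof -
          have n0: "0 \<le> K7 * norm (X \<epsilon> i t) ^ L3" using K67 by simp
          have n1: "0 \<le> K6 + K7 * BX k r ^ L3" using n0 Kmono[OF norm_ge_zero xb] K67 by linarith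
          show ?thesis using Kmono[OF norm_ge_zero xb] z(2) n1 by (intro mult_mono) auto
        qed
        then show ?thesis using D(2) by linarith
      qed
      also have "\<dots> = P i r" using i by (simp add: P_def k_def)
      also have "\<dots> \<le> (\<Sum>js\<in>Lf i. \<beta>f i js * (\<Prod>m<i - 1. r (m + 1) ^ (js ! m)))"
        using Lf i nnr by auto
      finally show "\<exists>D. ((\<lambda>e. c (X e i t) (needle u v \<tau> e t)) has_real_derivative D) (at_right \<epsilon>) \<and>
               \<bar>D\<bar> \<le> (\<Sum>js\<in>Lf i. \<beta>f i js * (\<Prod>m<i - 1. norm (ys (m + 1)) ^ (js ! m)))"
        using D(1) by (auto simp: r_def)
    next
      define k where "k = T - 1"
      have k: "Suc k = T" "real k + 1 = real T" "k < T" using T_pos by (auto simp: k_def)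
      have tk: "real T \<in> {real k..real k + 1}" using k by auto
      obtain z where z: "((\<lambda>e. X e T (real T)) has_vector_derivative z) (at \<epsilon> within {\<epsilon><..})" "norm z \<le> BZ k r"
      proof -
        have "k = 0 \<longrightarrow> \<tau> < real k + 1" using tau by auto
        then show ?thesis using conjunct2[OF C[OF k(3)], rule_format, OF tk] k tau T1 that by auto
      qed
      have xb: "norm (X \<epsilon> T (real T)) \<le> BX k r" using conjunct1[OF C[OF k(3)], rule_format, OF _ tk] k \<epsilon>0 \<epsilon>\<tau> by auto
      define x where "x = X \<epsilon> T (real T)"
      define y where "y = ys T"
      have dg: "((\<lambda>e. g (X e T (real T)) y) has_vector_derivative blinfun_apply (g' x y) z) (at \<epsilon> within {\<epsilon><..})"
        unfolding x_def by (rule chain_vd[OF z(1) g_diff])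
      have dh: "((\<lambda>e. h (g (X e T (real T)) y)) has_vector_derivative blinfun_apply (h' (g x y)) (blinfun_apply (g' x y) z)) (at \<epsilon> within {\<epsilon><..})"
        using chain_vd[OF dg h_diff] by (simp add: x_def)
      have Gb: "norm (g x y) \<le> G (BX k r) (r T)" "norm (g' x y) \<le> G (BX k r) (r T)"
      proof -
        have "norm (g x y) \<le> G (norm x) (r T)" using g_bound[of x y] by (simp add: G_def gpoly_def r_def y_def)
        also have "\<dots> \<le> G (BX k r) (r T)" unfolding G_def using xb by (intro gpoly_mono K2345) (auto simp: r_def x_def)
        finally show "norm (g x y) \<le> G (BX k r) (r T)" .
        have "norm (g' x y) \<le> G (norm x) (r T)" using g'_bound[of x y] by (simp add: G_def gpoly_def r_def y_def)
        also have "\<dots> \<le> G (BX k r) (r T)" unfolding G_def using xb by (intro gpoly_mono K2345) (auto simp: r_def x_def)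
        finally show "norm (g' x y) \<le> G (BX k r) (r T)" .
      qed
      have "\<bar>blinfun_apply (h' (g x y)) (blinfun_apply (g' x y) z)\<bar> \<le> norm (h' (g x y)) * norm (blinfun_apply (g' x y) z)"
        using norm_blinfun[of "h' (g x y)"] by simp
      also have "\<dots> \<le> (K6 + K7 * G (BX k r) (r T) ^ L3) * (G (BX k r) (r T) * BZ k r)"
      proof (rule mult_mono)
        show "norm (h' (g x y)) \<le> K6 + K7 * G (BX k r) (r T) ^ L3"
          using h'_bound[of "g x y"] Kmono[OF norm_ge_zero Gb(1)] by linarith
        show "norm (blinfun_apply (g' x y) z) \<le> G (BX k r) (r T) * BZ k r"
          using norm_blinfun[of "g' x y" z] Gb(2) z(2) by (meson mult_mono norm_ge_zero order_trans)
        have G0: "0 \<le> G (BX k r) (r T)" using Gb(1) by (meson norm_ge_zero order_trans)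
        then show "0 \<le> K6 + K7 * G (BX k r) (r T) ^ L3" using K67 by simp
      qed simp
      also have "\<dots> = P (T + 1) r" by (simp add: P_def k_def)
      also have "\<dots> \<le> (\<Sum>js\<in>Lf (T+1). \<beta>f (T+1) js * (\<Prod>m<T + 1 - 1. r (m + 1) ^ (js ! m)))"
      proof -
        have T2: "T + 1 \<in> {2..T+1}" using T_pos by auto
        have "\<forall>r. nn r \<longrightarrow> P (T + 1) r \<le> (\<Sum>js\<in>Lf (T+1). \<beta>f (T+1) js * (\<Prod>m<T + 1 - 1. r (m + 1) ^ (js ! m)))"
          using Lf T2 by blast
        then show ?thesis using nnr by blast
      qed
      finally show "\<exists>D. ((\<lambda>e. h (g (X e T (real T)) (ys T))) has_real_derivative D) (at_right \<epsilon>) \<and>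
               \<bar>D\<bar> \<le> (\<Sum>js\<in>Lf (T+1). \<beta>f (T+1) js * (\<Prod>m<T. norm (ys (m + 1)) ^ (js ! m)))"
        using dh by (auto simp: has_real_derivative_iff_has_vector_derivative r_def y_def)
    qed
  qed
qed


end
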